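(* Let $q$ be a prime power, $r\geq1$, $\delta\geq2$ integers, $R=r+\delta-1$, and $\ell,s,m$ integers with $\ell\geq1$, $s\geq0$, such that (C1) $\gcd(q,R)=1$; (C2) $(s+1)r<\ell R$; (C3) $s+1\leq\ell<q$; (C4) $\ell R\leq m$. Let $a_1,\dots,a_\ell\in\mathbb{F}_q^*$ be distinct, $h=\prod_{i=1}^{\ell}(T^R-a_i)$, and let $P\in\mathbb{F}_q[T]$ be a monic irreducible polynomial of degree $m$ with $P\equiv1\pmod h$. Let $\alpha\in\mathbb{F}_{q^m}$ be a root of $P$ and $\bar\phi$ the Drinfeld module over $\mathbb{F}_{q^m}$ with $\bar\phi_T=\alpha+\tau$. Let \[\mathcal M=\Big\{\sum_{k=0}^{s}g_k(\tau)\,\bar\phi_{T^R}^{\,k}\ :\ g_k\in\mathbb{F}_{q^m}\{\tau\}_{\leq r-1}\Big\},\] let $W_i=\bar\phi[T^R-a_i]$ and let $\{\beta^{(i)}_1,\dots,\beta^{(i)}_R\}$ be an $\mathbb{F}_q$-basis of $W_i$ for $i=1,\dots,\ell$. Define $\mathrm{enc}:\mathcal M\to\mathbb{F}_{q^m}^{\ell R}$ by $f\mapsto\big(f(\beta^{(i)}_j)\big)_{1\leq i\leq\ell,\,1\leq j\leq R}$, where $f$ acts via $\tau^i\mapsto x^{q^i}$. Then $\mathrm{enc}(\mathcal M)$, viewed as a matrix code in $\mathbb{F}_q^{m\times\ell R}$ via an $\mathbb{F}_q$-basis of $\mathbb{F}_{q^m}$, is an optimal $(m\times\ell R,\ m(s+1)r,\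 \ell R-Rs-r+1,\ r,\ \delta)$ rank-metric code: it has $\mathbb{F}_q$-dimension $m(s+1)r$, minimum rank distance $\ell R-Rs-r+1$, and rank-locality $(r,\delta)$, and it attains the bound $d_R\leq n-k+1-(\lceil k/r\rceil-1)(\delta-1)$ with $n=\ell R$, $k=(s+1)r$.
   Context: $\mathbb{F}_{q^m}\{\tau\}$ is the twisted polynomial ring with $(a\tau^i)(b\tau^j)=ab^{q^i}\tau^{i+j}$, and $\mathbb{F}_{q^m}\{\tau\}_{\leq n}$ its elements of $\tau$-degree at most $n$. A Drinfeld module $\bar\phi:\mathbb{F}_q[T]\to\mathbb{F}_{q^m}\{\tau\}$ is the $\mathbb{F}_q$-algebra homomorphism determined by $\bar\phi_T$; $\bar\phi[a]$ is the $\mathbb{F}_q$-space of roots of the $q$-linearized polynomial obtained from $\bar\phi_a$ by $\tau^i\mapsto x^{q^i}$. A vector $x\in\mathbb{F}_{q^m}^n$ is identified with the matrix in $\mathbb{F}_q^{m\times n}$ whose $j$-th column is the coordinate vector of $x_j$ in a fixed $\mathbb{F}_q$-basis of $\mathbb{F}_{q^m}$; the rank distance is the rank of the difference of matrices. An $(m\times n,K,d_R,r,\delta)$ rank-metric code is an $\mathbb{F}_q$-subspace of $\mathbb{F}_q^{m\times n}$ of $\mathbb{F}_q$-dimension $K$, minimum rank distance $d_R$ and rank-locality $(r,\delta)$, where rank-locality $(r,\delta)$ means: for every column index $i$ there is $\Gamma(i)\ni i$ with $|\Gamma(i)|\leq r+\delta-1$ and the code restricted to the columns in $\Gamma(i)$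 has minimum rank distance at least $\delta$. Any $(m\times n, mk)$ code with $(r,\delta)$ rank-locality satisfies $d_R\leq n-k+1-(\lceil k/r\rceil-1)(\delta-1)$; optimal means equality. *)

theory Defs
  imports Complex_Main "HOL-Computational_Algebra.Polynomial" "HOL-Library.Function_Algebras"
begin

definition span_over :: "'s set \<Rightarrow> ('s \<Rightarrow> 'v \<Rightarrow> 'v::ab_group_add) \<Rightarrow> 'v set \<Rightarrow> 'v set" where
  "span_over F sc S = {sum_list (map2 sc cs vs) | cs vs.
      length cs = length vs \<and> set cs \<subseteq> F \<and> set vs \<subseteq> S}"

definition indep_over :: "'s::zero set \<Rightarrow> ('s \<Rightarrow> 'v \<Rightarrow> 'v::ab_group_add) \<Rightarrow> 'v list \<Rightarrow> bool" where
  "indep_over F sc vs = (\<forall>cs. length cs = length vs \<and> set cs \<subseteq> F \<and>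
      sum_list (map2 sc cs vs) = 0 \<longrightarrow> set cs \<subseteq> {0})"

definition dim_over :: "'s::zero set \<Rightarrow> ('s \<Rightarrow> 'v \<Rightarrow> 'v::ab_group_add) \<Rightarrow> 'v set \<Rightarrow> nat" where
  "dim_over F sc V = (GREATEST d. \<exists>vs. length vs = d \<and> set vs \<subseteq> V \<and> indep_over F sc vs)"

definition subspace_over :: "'s set \<Rightarrow> ('s \<Rightarrow> 'v \<Rightarrow> 'v::ab_group_add) \<Rightarrow> 'v set \<Rightarrow> bool" where
  "subspace_over F sc V = (0 \<in> V \<and> (\<forall>x\<in>V. \<forall>y\<in>V. x + y \<in> V) \<and> (\<forall>c\<in>F. \<forall>x\<in>V. sc c x \<in> V))"

definition Fq :: "nat \<Rightarrow> 'k::field set" where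
  "Fq q = {x. x ^ q = x}"

definition vscale :: "'k::field \<Rightarrow> (nat \<Rightarrow> 'k) \<Rightarrow> (nat \<Rightarrow> 'k)" where
  "vscale c v = (\<lambda>j. c * v j)"

definition poly_over :: "nat \<Rightarrow> 'k::field poly \<Rightarrow> bool" where
  "poly_over q p = (\<forall>i. coeff p i \<in> Fq q)"

definition irreducible_over :: "nat \<Rightarrow> 'k::field poly \<Rightarrow> bool" where
  "irreducible_over q p = (poly_over q p \<and> degree p \<ge> 1 \<and>
     \<not> (\<exists>a b. poly_over q a \<and> poly_over q b \<and> degree a \<ge> 1 \<and> degree b \<ge> 1 \<and> p = a * b))"

section \<open>Twisted polynomials F_{q^m}{tau}, coefficient i = coefficient of tau^i\<close>

definition tmult :: "nat \<Rightarrow> 'k::field poly \<Rightarrow> 'k poly \<Rightarrow> 'k poly" where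
  "tmult q f g = (\<Sum>i\<le>degree f. \<Sum>j\<le>degree g. monom (coeff f i * coeff g j ^ (q ^ i)) (i + j))"

primrec tpow :: "nat \<Rightarrow> 'k::field poly \<Rightarrow> nat \<Rightarrow> 'k poly" where
  "tpow q f 0 = 1"
| "tpow q f (Suc n) = tmult q f (tpow q f n)"

definition teval :: "nat \<Rightarrow> 'k::field poly \<Rightarrow> 'k \<Rightarrow> 'k" where
  "teval q f x = (\<Sum>i\<le>degree f. coeff f i * x ^ (q ^ i))"

text \<open>Drinfeld module with phi_T = alpha + tau, applied to a in F_q[T].\<close>
definition drinfeld :: "nat \<Rightarrow> 'k::field \<Rightarrow> 'k poly \<Rightarrow> 'k poly" where
  "drinfeld q \<alpha> a = (\<Sum>i\<le>degree a. smult (coeff a i) (tpow q [:\<alpha>, 1:] i))"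

definition torsion :: "nat \<Rightarrow> 'k::field \<Rightarrow> 'k poly \<Rightarrow> 'k set" where
  "torsion q \<alpha> a = {x. teval q (drinfeld q \<alpha> a) x = 0}"

section \<open>Rank metric (vectors of length n as nat => 'k, zero beyond n)\<close>

text \<open>Rank of the m x n matrix over F_q = F_q-dimension of the span of the entries.\<close>
definition rank_wt :: "nat \<Rightarrow> nat \<Rightarrow> (nat \<Rightarrow> 'k::field) \<Rightarrow> nat" where
  "rank_wt q n x = dim_over (Fq q) (*) (x ` {..<n})"

definition min_rank_dist :: "nat \<Rightarrow> nat \<Rightarrow> (nat \<Rightarrow> 'k::field) set \<Rightarrow> nat" where
  "min_rank_dist q n C = Min {rank_wt q n (x - y) | x y. x \<in> C \<and> y \<in> C \<and> x \<noteq> y}"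

definition rank_locality :: "nat \<Rightarrow> nat \<Rightarrow> (nat \<Rightarrow> 'k::field) set \<Rightarrow> nat \<Rightarrow> nat \<Rightarrow> bool" where
  "rank_locality q n C r \<delta> = (\<forall>i<n. \<exists>\<Gamma>. i \<in> \<Gamma> \<and> \<Gamma> \<subseteq> {..<n} \<and> card \<Gamma> \<le> r + \<delta> - 1 \<and>
      (\<forall>x\<in>C. \<forall>y\<in>C. (\<exists>j\<in>\<Gamma>. x j \<noteq> y j) \<longrightarrow> dim_over (Fq q) (*) ((x - y) ` \<Gamma>) \<ge> \<delta>))"

end

theory Submission
  imports Defs "HOL-Computational_Algebra.Primes" "HOL-Library.FuncSet"
begin

lemma of_nat_card_zero: "of_nat (card (UNIV::'f::{finite,field} set)) = (0::'f)"
proof -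
  have "(\<Sum>y\<in>(UNIV::'f set). 1 + y) = (\<Sum>y\<in>UNIV. y)"
    by (rule sum.reindex_bij_witness[of _ "\<lambda>y. y - 1" "\<lambda>y. 1 + y"]) auto
  then show ?thesis by (simp add: sum.distrib)
qed

lemma CHAR_eq_p:
  assumes "card (UNIV::'f::{finite,field} set) = q ^ m" "prime p" "e > 0" "q = p ^ e"
  shows "CHAR('f) = p"
proof -
  have pc: "prime CHAR('f)"
    using prime_CHAR_semidom finite_imp_CHAR_pos[of ] by (metis finite_UNIV)
  have "of_nat (p ^ (e*m)) = (0::'f)"
    using of_nat_card_zero[where 'f='f] assms by (simp add: power_mult)
  then have "CHAR('f) dvd p ^ (e*m)"
    by (simp only: of_nat_eq_0_iff_char_dvd)
  then have "CHAR('f) dvd p" using pc prime_dvd_power by blast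
  then show ?thesis using pc assms(2) by (simp add: primes_dvd_imp_eq)
qed

lemma pow_card_same:
  fixes x :: "'f::{finite,field}"
  shows   "x ^ card (UNIV :: 'f set) = x"
proof (cases "x = 0")
  case False
  have "x * (\<Prod>y\<in>UNIV-{0}. x * y) = x * x ^ (card (UNIV :: 'f set) - 1) * \<Prod>(UNIV-{0})"
    by (simp add: prod.distrib mult_ac)
  also have "x * x ^ (card (UNIV :: 'f set) - 1) = x ^ Suc (card (UNIV :: 'f set) - 1)"
    by (subst power_Suc) auto
  also have "Suc (card (UNIV :: 'f set) - 1) = card (UNIV :: 'f set)"
    using finite_UNIV_card_ge_0[where ?'a = 'f] by simp
  also have "(\<Prod>y\<in>UNIV-{0}. x * y) = (\<Prod>y\<in>UNIV-{0}. y)"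
    by (rule prod.reindex_bij_witness[of _ "\<lambda>y. y / x" "\<lambda>y. x * y"]) (use False in auto)
  finally show ?thesis
    by simp
qed (use finite_UNIV_card_ge_0[where ?'a = 'f] in auto)

lemma card_fibers:
  assumes "finite A" "\<And>y. y \<in> f ` A \<Longrightarrow> card {x\<in>A. f x = y} = k"
  shows "card A = card (f ` A) * k"
proof -
  have "A = (\<Union>y\<in>f ` A. {x\<in>A. f x = y})" by auto
  moreover have "card (\<Union>y\<in>f ` A. {x\<in>A. f x = y}) = (\<Sum>y\<in>f ` A. card {x\<in>A. f x = y})"
    by (rule card_UN_disjoint) (auto simp: assms(1))
  ultimately have "card A = (\<Sum>y\<in>f ` A. card {x\<in>A. f x = y})" by simp
  also have "\<dots> = (\<Sum>y\<in>f ` A. k)" using assms(2) by simp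
  finally show ?thesis by simp
qed

lemma card_pow_roots:
  assumes "n \<ge> 1"
  shows "card {x::'f::field. x ^ n = c} \<le> n"
proof -
  let ?p = "monom (1::'f) n - [:c:]"
  have e: "?p = monom 1 n + [:-c:]" by (simp add: diff_conv_add_uminus)
  have d: "degree ?p = n" unfolding e using assms
    by (subst degree_add_eq_left) (auto simp: degree_monom_eq)
  then have "?p \<noteq> 0" using assms by auto
  moreover have "{x. x ^ n = c} = {x. poly ?p x = 0}" by (auto simp: poly_monom)
  ultimately show ?thesis using card_poly_roots_bound[of ?p] d by simp
qed

lemma card_pow_self_roots:
  assumes "n \<ge> 2"
  shows "card {x::'f::field. x ^ n = x} \<le> n"
proof -
  let ?p = "monom (1::'f) n + [:0,-1:]"
  have d: "degree ?p = n" using assms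
    by (subst degree_add_eq_left) (auto simp: degree_monom_eq)
  then have "?p \<noteq> 0" using assms by auto
  moreover have "{x. x ^ n = x} = {x. poly ?p x = 0}" by (auto simp: poly_monom)
  ultimately show ?thesis using card_poly_roots_bound[of ?p] d by simp
qed

lemma geom_nat: "(q - 1) * (\<Sum>i<m. q ^ i) = q ^ m - (1::nat)" if "q \<ge> 1"
proof -
  have "int ((q - 1) * (\<Sum>i<m. q ^ i)) = (int q - 1) * (\<Sum>i<m. int q ^ i)"
    using that by (simp add: of_nat_diff)
  also have "\<dots> = int q ^ m - 1" by (simp add: power_diff_1_eq)
  also have "\<dots> = int (q ^ m - 1)" using that by (simp add: of_nat_diff)
  finally show ?thesis by (simp only: of_nat_eq_iff)
qed

lemma card_Fq:
  assumes cardf: "card (UNIV::'f::{finite,field} set) = q ^ m" and m1: "m \<ge> 1" and q2: "q \<ge> 2"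
  shows "card (Fq q :: 'f set) = q"
proof -
  define U where "U = (UNIV - {0} :: 'f set)"
  define K where "K = {x\<in>U. x ^ (q - 1) = 1}"
  define t where "t = (\<Sum>i<m. q ^ i)"
  define N where "N = card (UNIV::'f set)"
  have tq: "(q - 1) * t = N - 1" unfolding t_def N_def cardf using geom_nat[of q m] q2 by simp
  have t1: "t \<ge> 1" unfolding t_def using m1
    by (metis One_nat_def Suc_le_eq gr0I lessThan_iff one_le_power order_trans q2 sum_nonneg_leq_bound
        zero_le_numeral finite_lessThan le_numeral_extra(4) sum_eq_0_iff less_numeral_extra(3) power_eq_0_iff zero_less_Suc nat_less_le)
  have cU: "card U = N - 1" unfolding U_def N_def by (simp add: card_Diff_singleton)
  have fib: "card {x\<in>U. x ^ (q - 1) = y} = card K" if yy: "y \<in> (\<lambda>x. x ^ (q - 1)) ` U" for y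
  proof -
    obtain x0 where x0: "x0 \<in> U" "y = x0 ^ (q - 1)" using yy by blast
    have "{x\<in>U. x ^ (q - 1) = y} = (\<lambda>z. x0 * z) ` K"
    proof (intro set_eqI iffI)
      fix x assume "x \<in> {x\<in>U. x ^ (q - 1) = y}"
      then have "x \<in> U" "x ^ (q - 1) = x0 ^ (q - 1)" using x0 by auto
      moreover have "x = x0 * (x / x0)" using x0 by (simp add: U_def)
      moreover have "(x / x0) ^ (q - 1) = 1" using calculation x0 by (simp add: U_def power_divide)
      ultimately show "x \<in> (\<lambda>z. x0 * z) ` K" unfolding K_def U_def by (auto intro!: image_eqI[of _ _ "x / x0"])
    next
      fix x assume "x \<in> (\<lambda>z. x0 * z) ` K"
      then show "x \<in> {x\<in>U. x ^ (q - 1) = y}" using x0 unfolding K_def U_def by (auto simp: power_mult_distrib)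
    qed
    moreover have "inj_on (\<lambda>z. x0 * z) K" using x0 by (auto simp: U_def inj_on_def)
    ultimately show ?thesis by (simp add: card_image)
  qed
  have "card U = card ((\<lambda>x. x ^ (q - 1)) ` U) * card K"
    by (rule card_fibers) (use fib in auto)
  moreover have "(\<lambda>x. x ^ (q - 1)) ` U \<subseteq> {y. y ^ t = 1}"
  proof
    fix y assume "y \<in> (\<lambda>x. x ^ (q - 1)) ` U"
    then obtain x where x: "x \<in> U" "y = x ^ (q - 1)" by auto
    have "x ^ N = x" unfolding N_def by (rule pow_card_same)
    moreover have "N = Suc (N - 1)" unfolding N_def using finite_UNIV_card_ge_0[where 'a='f] by simp
    ultimately have "x * x ^ (N - 1) = x * 1" by (metis power_Suc mult_1_right)
    then have "x ^ (N - 1) = 1" using x by (simp add: U_def)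
    then show "y \<in> {y. y ^ t = 1}" using x tq by (simp add: power_mult[symmetric])
  qed
  then have "card ((\<lambda>x. x ^ (q - 1)) ` U) \<le> t"
    using card_pow_roots[OF t1, of "1::'f"] card_mono[OF finite[of "{y::'f. y ^ t = 1}"]] by (meson order_trans)
  ultimately have "(q - 1) * t \<le> t * card K" using tq cU by (simp add: mult_le_mono1)
  then have "q - 1 \<le> card K" using t1 by (simp add: mult.commute)
  moreover have "Fq q = insert 0 K"
  proof (intro set_eqI iffI)
    fix x :: 'f assume "x \<in> Fq q"
    then have "x ^ q = x" by (simp add: Fq_def)
    moreover have "x ^ q = x * x ^ (q - 1)" using q2 by (metis Suc_diff_1 less_le_trans pos2 power_Suc)
    ultimately show "x \<in> insert 0 K" unfolding K_def U_def by auto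
  next
    fix x :: 'f assume "x \<in> insert 0 K"
    moreover have "x ^ q = x * x ^ (q - 1)" using q2 by (metis Suc_diff_1 less_le_trans pos2 power_Suc)
    ultimately show "x \<in> Fq q" unfolding K_def U_def Fq_def using q2 by auto
  qed
  moreover have "0 \<notin> K" by (simp add: K_def U_def)
  ultimately have "card (Fq q :: 'f set) \<ge> q" using q2 by (simp add: K_def)
  moreover have "card (Fq q :: 'f set) \<le> q" unfolding Fq_def by (rule card_pow_self_roots[OF q2])
  ultimately show ?thesis by simp
qed


locale tw =
  fixes q :: nat and ty :: "'f::{finite,field} itself"
  assumes q2: "q \<ge> 2"
    and fr: "\<And>i (x::'f) y. (x + y) ^ (q ^ i) = x ^ (q ^ i) + y ^ (q ^ i)"
    and cardFq: "card (Fq q :: 'f set) = q"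
begin

lemma q0: "q > 0" using q2 by linarith
lemma qne: "q \<noteq> 0" using q2 by linarith
lemma qpos: "q ^ i > 0" using q0 by simp

lemma fr_sum: "(\<Sum>j\<in>A. g j :: 'f) ^ (q ^ i) = (\<Sum>j\<in>A. g j ^ (q ^ i))"
  by (induction A rule: infinite_finite_induct) (auto simp: fr qpos q0)

lemma fr_zero: "(0::'f) ^ (q ^ i) = 0" using qpos by simp

lemma fr_neg: "(- x :: 'f) ^ (q ^ i) = - (x ^ (q ^ i))"
proof -
  have "(x + - x) ^ (q ^ i) = x ^ (q ^ i) + (- x) ^ (q ^ i)" by (rule fr)
  then show ?thesis using fr_zero by (simp add: add_eq_0_iff)
qed

lemma fr_diff: "(x - y :: 'f) ^ (q ^ i) = x ^ (q ^ i) - y ^ (q ^ i)"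
  using fr[where i=i and x=x and y="-y"] fr_neg by simp

lemma Fq_pow: "c \<in> (Fq q :: 'f set) \<Longrightarrow> c ^ (q ^ i) = c"
proof (induction i)
  case 0 then show ?case by simp
next
  case (Suc i)
  have "c ^ (q ^ Suc i) = (c ^ (q ^ i)) ^ q" by (simp add: power_mult[symmetric] mult.commute)
  then show ?case using Suc by (simp add: Fq_def)
qed

lemma Fq_add: "a \<in> Fq q \<Longrightarrow> b \<in> Fq q \<Longrightarrow> (a + b :: 'f) \<in> Fq q"
  using fr[where i=1 and x=a and y=b] by (simp add: Fq_def)
lemma Fq_neg: "a \<in> Fq q \<Longrightarrow> (- a :: 'f) \<in> Fq q"
  using fr_neg[where x=a and i=1] by (simp add: Fq_def)
lemma Fq_diff: "a \<in> Fq q \<Longrightarrow> b \<in> Fq q \<Longrightarrow> (a - b :: 'f) \<in> Fq q"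
  using Fq_add Fq_neg by (metis diff_conv_add_uminus)
lemma Fq_mult: "a \<in> Fq q \<Longrightarrow> b \<in> Fq q \<Longrightarrow> (a * b :: 'f) \<in> Fq q"
  by (simp add: Fq_def power_mult_distrib)
lemma Fq_0: "(0::'f) \<in> Fq q" using q2 by (simp add: Fq_def)
lemma Fq_1: "(1::'f) \<in> Fq q" by (simp add: Fq_def)
lemma Fq_power: "a \<in> Fq q \<Longrightarrow> (a ^ k :: 'f) \<in> Fq q"
  by (induction k) (auto simp: Fq_1 Fq_mult)
lemma Fq_sum: "(\<And>j. j \<in> A \<Longrightarrow> g j \<in> Fq q) \<Longrightarrow> (\<Sum>j\<in>A. g j :: 'f) \<in> Fq q"
  by (induction A rule: infinite_finite_induct) (auto simp: Fq_0 Fq_add)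
lemma Fq_prod: "(\<And>j. j \<in> A \<Longrightarrow> g j \<in> Fq q) \<Longrightarrow> (\<Prod>j\<in>A. g j :: 'f) \<in> Fq q"
  by (induction A rule: infinite_finite_induct) (auto simp: Fq_1 Fq_mult)
lemma Fq_inverse: "a \<in> Fq q \<Longrightarrow> (inverse a :: 'f) \<in> Fq q"
  by (simp add: Fq_def power_inverse)

lemma teval_ext:
  fixes f :: "'f poly"
  assumes "degree f \<le> N"
  shows "teval q f x = (\<Sum>i\<le>N. coeff f i * x ^ (q ^ i))"
  unfolding teval_def
  by (rule sum.mono_neutral_left) (use assms in \<open>auto simp: coeff_eq_0\<close>)

lemma teval_0 [simp]: fixes f :: "'f poly" shows "teval q 0 x = 0" by (simp add: teval_def)

lemma teval_add: fixes f :: "'f poly" shows "teval q (f + g) x = teval q f x + teval q g x"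
proof -
  define N where "N = max (degree f) (degree g)"
  have "degree (f + g) \<le> N" "degree f \<le> N" "degree g \<le> N"
    unfolding N_def by (auto intro: degree_add_le)
  then show ?thesis by (simp add: teval_ext[of _ N] algebra_simps sum.distrib)
qed

lemma teval_smult: fixes f :: "'f poly" shows "teval q (smult c f) x = c * teval q f x"
  using teval_ext[of "smult c f" "degree f"] teval_ext[of f "degree f"]
  by (simp add: sum_distrib_left mult.assoc)

lemma teval_uminus: fixes f :: "'f poly" shows "teval q (- f) x = - teval q f x"
  using teval_smult[of "-1" f x] by simp

lemma teval_diff: fixes f :: "'f poly" shows "teval q (f - g) x = teval q f x - teval q g x"
  using teval_add[of f "-g"] teval_uminus by simp

lemma teval_sum: fixes g :: "_ \<Rightarrow> 'f poly" shows "teval q (\<Sum>j\<in>A. g j) x = (\<Sum>j\<in>A. teval q (g j) x)"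
  by (induction A rule: infinite_finite_induct) (auto simp: teval_add)

lemma teval_monom: fixes c :: 'f shows "teval q (monom c n) x = c * x ^ (q ^ n)"
proof -
  have "teval q (monom c n) x = (\<Sum>i\<le>n. coeff (monom c n) i * x ^ (q ^ i))"
    by (rule teval_ext) (simp add: degree_monom_le)
  also have "\<dots> = (\<Sum>i\<in>{n}. coeff (monom c n) i * x ^ (q ^ i))"
    by (rule sum.mono_neutral_right) (auto simp: coeff_monom)
  finally show ?thesis by (simp add: coeff_monom)
qed

lemma teval_const: fixes f :: "'f poly" shows "teval q [:c:] x = c * x"
  unfolding teval_def by simp

lemma teval_xadd: fixes f :: "'f poly" shows "teval q f (x + y) = teval q f x + teval q f y"
  unfolding teval_def by (simp only: fr distrib_left sum.distrib)

lemma teval_xzero [simp]: fixes f :: "'f poly" shows "teval q f 0 = 0"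
  unfolding teval_def by (simp add: power_0_left qne)

lemma teval_xneg: fixes f :: "'f poly" shows "teval q f (- x) = - teval q f x"
  using teval_xadd[of f x "-x"] by (simp add: add_eq_0_iff)

lemma teval_xdiff: fixes f :: "'f poly" shows "teval q f (x - y) = teval q f x - teval q f y"
  using teval_xadd[of f x "-y"] teval_xneg by simp

lemma teval_xscale: fixes f :: "'f poly" shows "c \<in> Fq q \<Longrightarrow> teval q f (c * x) = c * teval q f x"
proof -
  assume c: "c \<in> Fq q"
  then have "\<And>i. c ^ (q ^ i) = c" by (rule Fq_pow)
  then show ?thesis unfolding teval_def by (simp add: power_mult_distrib sum_distrib_left mult.left_commute)
qed

lemma teval_xsum: fixes f :: "'f poly" shows "teval q f (\<Sum>j\<in>A. g j) = (\<Sum>j\<in>A. teval q f (g j))"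
  by (induction A rule: infinite_finite_induct) (auto simp: teval_xadd)

lemma teval_tmult: fixes f :: "'f poly" shows "teval q (tmult q f g) x = teval q f (teval q g x)"
proof -
  have "teval q (tmult q f g) x =
     (\<Sum>i\<le>degree f. \<Sum>j\<le>degree g. coeff f i * coeff g j ^ (q ^ i) * x ^ (q ^ (i + j)))"
    unfolding tmult_def by (simp add: teval_sum teval_monom)
  also have "\<dots> = (\<Sum>i\<le>degree f. coeff f i * (\<Sum>j\<le>degree g. coeff g j * x ^ (q ^ j)) ^ (q ^ i))"
  proof (intro sum.cong refl)
    fix i
    have pp: "(x ^ (q ^ j)) ^ (q ^ i) = x ^ (q ^ (i + j))" for j
      by (simp add: power_mult[symmetric] power_add mult.commute)
    show "(\<Sum>j\<le>degree g. coeff f i * coeff g j ^ (q ^ i) * x ^ (q ^ (i + j))) =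
        coeff f i * (\<Sum>j\<le>degree g. coeff g j * x ^ (q ^ j)) ^ (q ^ i)"
      by (simp add: fr_sum sum_distrib_left power_mult_distrib pp mult.assoc)
  qed
  finally show ?thesis by (simp add: teval_def)
qed

lemma teval_tpow: fixes f :: "'f poly" shows "teval q (tpow q f k) x = (teval q f ^^ k) x"
  by (induction k) (simp_all add: teval_tmult, simp add: teval_def)

lemma degree_tmult_le: fixes f :: "'f poly" shows "degree (tmult q f g) \<le> degree f + degree g"
  unfolding tmult_def
  by (intro degree_sum_le order.trans[OF degree_monom_le]) auto

lemma degree_tpow_le: fixes f :: "'f poly" shows "degree (tpow q f k) \<le> k * degree f"
proof (induction k)
  case (Suc k) then show ?case using degree_tmult_le[of f "tpow q f k"] by simp
qed simp

definition ordp :: "'f poly \<Rightarrow> 'f poly" where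
  "ordp f = (\<Sum>i\<le>degree f. monom (coeff f i) (q ^ i))"

lemma poly_ordp: "poly (ordp f) x = teval q f x"
  by (simp add: ordp_def teval_def poly_sum poly_monom)

lemma teval_roots:
  fixes f :: "'f poly"
  assumes "f \<noteq> 0"
  shows "card {x. teval q f x = 0} \<le> q ^ degree f"
proof -
  have inj: "q ^ i = q ^ j \<longleftrightarrow> i = j" for i j using q2 by (simp add: power_inject_exp)
  have "coeff (ordp f) (q ^ degree f) = (\<Sum>i\<le>degree f. if i = degree f then coeff f i else 0)"
    unfolding ordp_def coeff_sum coeff_monom by (intro sum.cong) (auto simp: inj)
  also have "\<dots> = lead_coeff f" by simp
  finally have "ordp f \<noteq> 0" using assms by auto
  moreover have "degree (ordp f) \<le> q ^ degree f"
    unfolding ordp_def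
    by (intro degree_sum_le order.trans[OF degree_monom_le]) (auto intro!: power_increasing simp: q0 Suc_leI)
  ultimately show ?thesis using card_poly_roots_bound[of "ordp f"] by (simp add: poly_ordp)
qed

end


locale fmod =
  fixes F :: "'s::field set" and sc :: "'s \<Rightarrow> 'v::ab_group_add \<Rightarrow> 'v"
  assumes F0: "0 \<in> F" and F1: "1 \<in> F"
    and Fadd: "\<And>a b. a \<in> F \<Longrightarrow> b \<in> F \<Longrightarrow> a + b \<in> F"
    and Fneg: "\<And>a. a \<in> F \<Longrightarrow> - a \<in> F"
    and Fmult: "\<And>a b. a \<in> F \<Longrightarrow> b \<in> F \<Longrightarrow> a * b \<in> F"
    and Finv: "\<And>a. a \<in> F \<Longrightarrow> inverse a \<in> F"
    and Ffin: "finite F"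
    and sc_add_r: "\<And>c x y. sc c (x + y) = sc c x + sc c y"
    and sc_add_l: "\<And>c d x. sc (c + d) x = sc c x + sc d x"
    and sc_mult: "\<And>c d x. sc (c * d) x = sc c (sc d x)"
    and sc_one: "\<And>x. sc 1 x = x"
begin

lemma Fdiff: "a \<in> F \<Longrightarrow> b \<in> F \<Longrightarrow> a - b \<in> F"
  using Fadd Fneg by (metis diff_conv_add_uminus)

lemma sc_zero_l [simp]: "sc 0 x = 0"
  using sc_add_l[of 0 0 x] by simp

lemma sc_zero_r [simp]: "sc c 0 = 0"
  using sc_add_r[of c 0 0] by simp

lemma sc_neg_r: "sc c (- x) = - sc c x"
  using sc_add_r[of c x "-x"] by (simp add: add_eq_0_iff)

lemma sc_neg_l: "sc (- c) x = - sc c x"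
  using sc_add_l[of c "-c" x] by (simp add: eq_neg_iff_add_eq_0 add.commute)

lemma sc_diff_l: "sc (c - d) x = sc c x - sc d x"
  using sc_add_l[of c "-d" x] sc_neg_l by simp

lemma sc_sum_r: "sc c (\<Sum>j\<in>A. g j) = (\<Sum>j\<in>A. sc c (g j))"
  by (induction A rule: infinite_finite_induct) (auto simp: sc_add_r)

lemma sc_sum_l: "sc (\<Sum>j\<in>A. g j) x = (\<Sum>j\<in>A. sc (g j) x)"
  by (induction A rule: infinite_finite_induct) (auto simp: sc_add_l)

lemma cardF2: "card F \<ge> 2"
proof -
  have "{0, 1} \<subseteq> F" using F0 F1 by auto
  then have "card {0::'s, 1} \<le> card F" using Ffin by (rule card_mono[rotated])
  then show ?thesis by simp
qed

definition lc :: "'s list \<Rightarrow> 'v list \<Rightarrow> 'v" where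
  "lc cs vs = (\<Sum>j<length vs. sc (cs ! j) (vs ! j))"

lemma sum_list_map2: "length cs = length vs \<Longrightarrow> sum_list (map2 sc cs vs) = lc cs vs"
  unfolding lc_def by (simp add: sum_list_sum_nth atLeast0LessThan)

definition lspan :: "'v list \<Rightarrow> 'v set" where
  "lspan vs = {lc cs vs | cs. length cs = length vs \<and> set cs \<subseteq> F}"

lemma indep_lc: "indep_over F sc vs \<longleftrightarrow>
  (\<forall>cs. length cs = length vs \<and> set cs \<subseteq> F \<and> lc cs vs = 0 \<longrightarrow> set cs \<subseteq> {0})"
  unfolding indep_over_def using sum_list_map2 by metis

lemma span_0: "0 \<in> span_over F sc S"
  unfolding span_over_def by (auto intro!: exI[of _ "[]"])

lemma span_add:
  assumes "x \<in> span_over F sc S" "y \<in> span_over F sc S" shows "x + y \<in> span_over F sc S"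
proof -
  obtain cs vs where a: "x = sum_list (map2 sc cs vs)" "length cs = length vs" "set cs \<subseteq> F" "set vs \<subseteq> S"
    using assms(1) unfolding span_over_def by blast
  obtain cs' vs' where b: "y = sum_list (map2 sc cs' vs')" "length cs' = length vs'" "set cs' \<subseteq> F" "set vs' \<subseteq> S"
    using assms(2) unfolding span_over_def by blast
  show ?thesis unfolding span_over_def
    by (intro CollectI exI[of _ "cs @ cs'"] exI[of _ "vs @ vs'"]) (use a b in \<open>auto simp: zip_append\<close>)
qed

lemma map2_sc_scale: "length cs = length vs \<Longrightarrow> sum_list (map2 sc (map ((*) c) cs) vs) = sc c (sum_list (map2 sc cs vs))"
  by (induction cs vs rule: list_induct2) (auto simp: sc_mult sc_add_r)

lemma span_sc:
  assumes "c \<in> F" "x \<in> span_over F sc S" shows "sc c x \<in> span_over F sc S"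
proof -
  obtain cs vs where a: "x = sum_list (map2 sc cs vs)" "length cs = length vs" "set cs \<subseteq> F" "set vs \<subseteq> S"
    using assms(2) unfolding span_over_def by blast
  show ?thesis unfolding span_over_def
    by (intro CollectI exI[of _ "map ((*) c) cs"] exI[of _ "vs"]) (use a assms(1) in \<open>auto simp: map2_sc_scale Fmult\<close>)
qed

lemma span_sub: "x \<in> S \<Longrightarrow> x \<in> span_over F sc S"
  unfolding span_over_def
  by (rule CollectI, rule exI[of _ "[1]"], rule exI[of _ "[x]"]) (auto simp: F1 sc_one)

lemma span_minimal:
  assumes "S \<subseteq> T" "0 \<in> T" "\<And>x y. x \<in> T \<Longrightarrow> y \<in> T \<Longrightarrow> x + y \<in> T"
    "\<And>c x. c \<in> F \<Longrightarrow> x \<in> T \<Longrightarrow> sc c x \<in> T"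
  shows "span_over F sc S \<subseteq> T"
proof
  fix x assume "x \<in> span_over F sc S"
  then obtain cs vs where x: "x = sum_list (map2 sc cs vs)" "length cs = length vs" "set cs \<subseteq> F" "set vs \<subseteq> S"
    unfolding span_over_def by blast
  have "sum_list (map2 sc cs vs) \<in> T" using x(2-4)
    by (induction cs vs rule: list_induct2) (use assms in auto)
  then show "x \<in> T" using x by simp
qed

lemma span_mono: "S \<subseteq> S' \<Longrightarrow> span_over F sc S \<subseteq> span_over F sc S'"
  by (rule span_minimal) (auto intro: span_sub span_0 span_add span_sc)

lemma span_span: "span_over F sc (span_over F sc S) = span_over F sc S"
  by (rule antisym, rule span_minimal) (auto intro: span_sub span_0 span_add span_sc)

lemma subspace_span: "subspace_over F sc (span_over F sc S)"
  unfolding subspace_over_def by (auto intro: span_0 span_add span_sc)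

lemma span_subspace: "subspace_over F sc U \<Longrightarrow> span_over F sc U = U"
  unfolding subspace_over_def
  by (rule antisym, rule span_minimal) (auto intro: span_sub)

lemma lc_add: "length cs = length vs \<Longrightarrow> length cs' = length vs \<Longrightarrow>
   lc (map2 (+) cs cs') vs = lc cs vs + lc cs' vs"
  unfolding lc_def by (simp add: sc_add_l sum.distrib)

lemma lc_diff: "length cs = length vs \<Longrightarrow> length cs' = length vs \<Longrightarrow>
   lc (map2 (-) cs cs') vs = lc cs vs - lc cs' vs"
  unfolding lc_def by (simp add: sc_diff_l sum_subtractf)

lemma lc_scale: "length cs = length vs \<Longrightarrow> lc (map ((*) c) cs) vs = sc c (lc cs vs)"
  unfolding lc_def by (simp add: sc_mult sc_sum_r)

lemma lspan_eq: "lspan vs = span_over F sc (set vs)"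
proof
  show "lspan vs \<subseteq> span_over F sc (set vs)"
  proof
    fix x assume "x \<in> lspan vs"
    then obtain cs where "x = lc cs vs" "length cs = length vs" "set cs \<subseteq> F" unfolding lspan_def by blast
    then show "x \<in> span_over F sc (set vs)" unfolding span_over_def
      by (intro CollectI exI[of _ cs] exI[of _ vs]) (simp add: sum_list_map2)
  qed
next
  have cl_add: "x + y \<in> lspan vs" if xy: "x \<in> lspan vs" "y \<in> lspan vs" for x y
  proof -
    obtain cs cs' where "x = lc cs vs" "length cs = length vs" "set cs \<subseteq> F"
       "y = lc cs' vs" "length cs' = length vs" "set cs' \<subseteq> F"
      using xy unfolding lspan_def by blast
    then show ?thesis unfolding lspan_def
      by (intro CollectI exI[of _ "map2 (+) cs cs'"])
        (auto simp: lc_add set_zip intro!: Fadd intro: subsetD[OF _ nth_mem])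
  qed
  have cl_sc: "sc c x \<in> lspan vs" if cx: "c \<in> F" "x \<in> lspan vs" for c x
  proof -
    obtain cs where "x = lc cs vs" "length cs = length vs" "set cs \<subseteq> F"
      using cx unfolding lspan_def by blast
    then show ?thesis unfolding lspan_def using cx(1)
      by (intro CollectI exI[of _ "map ((*) c) cs"]) (auto simp: lc_scale Fmult)
  qed
  have cl_0: "0 \<in> lspan vs" unfolding lspan_def
    by (intro CollectI exI[of _ "replicate (length vs) 0"]) (auto simp: lc_def F0)
  have cl_v: "v \<in> lspan vs" if vv: "v \<in> set vs" for v
  proof -
    obtain i where i: "i < length vs" "vs ! i = v" using vv by (auto simp: in_set_conv_nth)
    let ?cs = "map (\<lambda>j. if j = i then 1 else 0) [0..<length vs]"
    have "lc ?cs vs = (\<Sum>j<length vs. if j = i then vs ! j else 0)"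
      unfolding lc_def by (intro sum.cong) (auto simp: sc_one)
    also have "\<dots> = v" using i by simp
    finally show ?thesis unfolding lspan_def using F0 F1
      by (intro CollectI exI[of _ ?cs]) auto
  qed
  show "span_over F sc (set vs) \<subseteq> lspan vs"
    by (rule span_minimal) (use cl_add cl_sc cl_0 cl_v in auto)
qed

lemma card_lspan:
  assumes "indep_over F sc vs"
  shows "card (lspan vs) = card F ^ length vs"
proof -
  let ?L = "{cs. set cs \<subseteq> F \<and> length cs = length vs}"
  have "inj_on (\<lambda>cs. lc cs vs) ?L"
  proof (rule inj_onI)
    fix cs cs' assume a: "cs \<in> ?L" "cs' \<in> ?L" "lc cs vs = lc cs' vs"
    then have z: "lc (map2 (-) cs cs') vs = 0" by (simp add: lc_diff)
    have Fs: "set (map2 (-) cs cs') \<subseteq> F" using a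
      by (fastforce simp: set_zip intro!: Fdiff intro: subsetD[OF _ nth_mem])
    have "set (map2 (-) cs cs') \<subseteq> {0}"
      by (rule assms[unfolded indep_lc, rule_format]) (intro conjI, use a in simp, rule Fs, rule z)
    have "cs ! j = cs' ! j" if j: "j < length vs" for j
    proof -
      have "(map2 (-) cs cs') ! j \<in> set (map2 (-) cs cs')" by (rule nth_mem) (use a j in simp)
      then have "(map2 (-) cs cs') ! j = 0" using \<open>set (map2 (-) cs cs') \<subseteq> {0}\<close> by blast
      then show ?thesis using a j by simp
    qed
    then have "\<forall>j<length vs. cs ! j = cs' ! j" by blast
    then show "cs = cs'" using a by (simp add: nth_equalityI)
  qed
  moreover have "(\<lambda>cs. lc cs vs) ` ?L = lspan vs" unfolding lspan_def by auto
  ultimately have "card (lspan vs) = card ?L" by (metis card_image)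
  then show ?thesis by (simp add: card_lists_length_eq Ffin)
qed

lemma indep_bound:
  assumes "indep_over F sc vs" "set vs \<subseteq> S" "finite (span_over F sc S)"
  shows "card F ^ length vs \<le> card (span_over F sc S)"
proof -
  have "lspan vs \<subseteq> span_over F sc S" using span_mono[OF assms(2)] by (simp add: lspan_eq)
  then show ?thesis using card_lspan[OF assms(1)] assms(3) by (metis card_mono)
qed

lemma indep_extend:
  assumes "indep_over F sc vs" "w \<notin> span_over F sc (set vs)"
  shows "indep_over F sc (w # vs)"
  unfolding indep_lc
proof (intro allI impI)
  fix cs assume a: "length cs = length (w # vs) \<and> set cs \<subseteq> F \<and> lc cs (w # vs) = 0"
  then obtain c cs' where cs: "cs = c # cs'" by (cases cs) auto
  have l: "length cs' = length vs" "c \<in> F" "set cs' \<subseteq> F" using a cs by auto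
  have "lc cs (w # vs) = sc c w + lc cs' vs"
    unfolding lc_def cs by (simp del: sum.lessThan_Suc add: sum.lessThan_Suc_shift)
  then have e: "sc c w + lc cs' vs = 0" using a by simp
  have "lc cs' vs \<in> span_over F sc (set vs)" using l by (auto simp: lspan_def lspan_eq[symmetric])
  have c0: "c = 0"
  proof (rule ccontr)
    assume "c \<noteq> 0"
    have "sc (- inverse c) (lc cs' vs) \<in> span_over F sc (set vs)"
      using \<open>lc cs' vs \<in> _\<close> l by (intro span_sc) (auto intro: Fneg Finv)
    moreover have "sc (- inverse c) (lc cs' vs) = w"
    proof -
      have "lc cs' vs = - sc c w" using e by (simp add: eq_neg_iff_add_eq_0 add.commute)
      then have "sc (- inverse c) (lc cs' vs) = sc (inverse c * c) w"
        by (simp add: sc_neg_l sc_neg_r sc_mult)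
      then show ?thesis using \<open>c \<noteq> 0\<close> by (simp add: sc_one)
    qed
    ultimately show False using assms(2) by simp
  qed
  then have "lc cs' vs = 0" using e by simp
  then have "set cs' \<subseteq> {0}" using assms(1) l unfolding indep_lc by auto
  then show "set cs \<subseteq> {0}" using c0 cs by auto
qed

lemma indep_nil: "indep_over F sc []"
  unfolding indep_over_def by auto

lemma dim_span:
  assumes fin: "finite (span_over F sc S)"
  shows "card F ^ dim_over F sc S = card (span_over F sc S)"
proof -
  define P where "P d = (\<exists>vs. length vs = d \<and> set vs \<subseteq> S \<and> indep_over F sc vs)" for d
  have bnd: "d \<le> card (span_over F sc S)" if Pd: "P d" for d
  proof -
    obtain vs where "length vs = d" "set vs \<subseteq> S" "indep_over F sc vs" using Pd unfolding P_def by blast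
    then have "card F ^ d \<le> card (span_over F sc S)" using indep_bound fin by blast
    moreover have "d < 2 ^ d" by (rule less_exp)
    moreover have "2 ^ d \<le> card F ^ d" using cardF2 by (simp add: power_mono)
    ultimately show ?thesis by linarith
  qed
  have P0: "P 0" unfolding P_def using indep_nil by auto
  have dd: "dim_over F sc S = Greatest P" unfolding dim_over_def P_def by simp
  have "P (Greatest P)" using GreatestI_nat[of P 0 "card (span_over F sc S)"] P0 bnd by blast
  then obtain vs where vs: "length vs = dim_over F sc S" "set vs \<subseteq> S" "indep_over F sc vs"
    unfolding P_def dd by blast
  have "S \<subseteq> span_over F sc (set vs)"
  proof
    fix w assume w: "w \<in> S"
    show "w \<in> span_over F sc (set vs)"
    proof (rule ccontr)
      assume "w \<notin> span_over F sc (set vs)"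
      then have "P (Suc (length vs))" unfolding P_def using indep_extend[OF vs(3)] vs(2) w
        by (intro exI[of _ "w # vs"]) auto
      then have "Suc (length vs) \<le> Greatest P" using Greatest_le_nat[of P _ "card (span_over F sc S)"] bnd by blast
      then show False using vs(1) dd by simp
    qed
  qed
  then have "span_over F sc S \<subseteq> span_over F sc (set vs)"
    using span_mono span_span by metis
  moreover have "span_over F sc (set vs) \<subseteq> span_over F sc S" using span_mono vs(2) by blast
  ultimately have "span_over F sc S = lspan vs" by (simp add: lspan_eq)
  then show ?thesis using card_lspan[OF vs(3)] vs(1) by simp
qed

lemma dim_subspace:
  assumes "subspace_over F sc U" "finite U"
  shows "card F ^ dim_over F sc U = card U"
  using dim_span[of U] span_subspace[OF assms(1)] assms(2) by simp

lemma indep_distinct_nz: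
  assumes "indep_over F sc vs"
  shows "distinct vs \<and> 0 \<notin> set vs"
proof
  show "distinct vs"
  proof (rule ccontr)
    assume "\<not> distinct vs"
    then obtain i j where ij: "i < length vs" "j < length vs" "i \<noteq> j" "vs ! i = vs ! j"
      by (auto simp: distinct_conv_nth)
    let ?cs = "map (\<lambda>k. if k = i then (1::'s) else if k = j then -1 else 0) [0..<length vs]"
    have "lc ?cs vs = (\<Sum>k<length vs. sc (if k = i then 1 else if k = j then -1 else 0) (vs ! k))"
      unfolding lc_def by (intro sum.cong) auto
    also have "\<dots> = (\<Sum>k\<in>{i,j}. sc (if k = i then 1 else if k = j then -1 else 0) (vs ! k))"
      by (rule sum.mono_neutral_right) (use ij in auto)
    also have "\<dots> = 0" using ij by (simp add: sc_one sc_neg_l)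
    finally have z: "lc ?cs vs = 0" .
    have Fs: "set ?cs \<subseteq> F" using F0 F1 Fneg[OF F1] by auto
    have "set ?cs \<subseteq> {0}"
      by (rule assms[unfolded indep_lc, rule_format]) (intro conjI, simp, rule Fs, rule z)
    moreover have "?cs ! i = 1" using ij by simp
    moreover have "?cs ! i \<in> set ?cs" by (rule nth_mem) (use ij in simp)
    ultimately show False by auto
  qed
next
  show "0 \<notin> set vs"
  proof
    assume "0 \<in> set vs"
    then obtain i where i: "i < length vs" "vs ! i = 0" by (auto simp: in_set_conv_nth)
    let ?cs = "map (\<lambda>k. if k = i then (1::'s) else 0) [0..<length vs]"
    have z: "lc ?cs vs = 0" unfolding lc_def using i by (intro sum.neutral) auto
    have Fs: "set ?cs \<subseteq> F" using F0 F1 by auto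
    have "set ?cs \<subseteq> {0}"
      by (rule assms[unfolded indep_lc, rule_format]) (intro conjI, simp, rule Fs, rule z)
    moreover have "?cs ! i = 1" using i by simp
    moreover have "?cs ! i \<in> set ?cs" by (rule nth_mem) (use i in simp)
    ultimately show False by auto
  qed
qed

lemma dim_le_card:
  assumes "finite S" "finite (span_over F sc S)"
  shows "dim_over F sc S \<le> card (S - {0})"
proof -
  define P where "P d = (\<exists>vs. length vs = d \<and> set vs \<subseteq> S \<and> indep_over F sc vs)" for d
  have bnd: "d \<le> card (S - {0})" if Pd: "P d" for d
  proof -
    obtain vs where vs: "length vs = d" "set vs \<subseteq> S" "indep_over F sc vs" using Pd unfolding P_def by blast
    then have "distinct vs" "0 \<notin> set vs" using indep_distinct_nz by auto
    then have "card (set vs) = d" "set vs \<subseteq> S - {0}" using vs by (auto simp: distinct_card)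
    then show ?thesis using assms(1) by (metis card_mono finite_Diff)
  qed
  have P0: "P 0" unfolding P_def using indep_nil by auto
  have "P (Greatest P)" using GreatestI_nat[of P 0 "card (S - {0})"] P0 bnd by blast
  then show ?thesis using bnd unfolding dim_over_def P_def by blast
qed

end


context tw
begin

lemma fmod_mult: "fmod (Fq q :: 'f set) (*)"
  by unfold_locales (auto simp: Fq_0 Fq_1 Fq_add Fq_neg Fq_mult Fq_inverse algebra_simps)

lemma fmod_vscale: "fmod (Fq q :: 'f set) (vscale :: 'f \<Rightarrow> (nat \<Rightarrow> 'f) \<Rightarrow> (nat \<Rightarrow> 'f))"
  by unfold_locales (auto simp: Fq_0 Fq_1 Fq_add Fq_neg Fq_mult Fq_inverse vscale_def fun_eq_iff algebra_simps)

lemma map2_teval: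
  fixes f :: "'f poly"
  assumes "length cs = length vs" "set cs \<subseteq> Fq q"
  shows "sum_list (map2 (*) cs (map (teval q f) vs)) = teval q f (sum_list (map2 (*) cs vs))"
  using assms by (induction cs vs rule: list_induct2) (auto simp: teval_xadd teval_xscale)

lemma span_image_teval:
  fixes f :: "'f poly"
  shows "span_over (Fq q) (*) (teval q f ` S) = teval q f ` span_over (Fq q) (*) S"
proof
  show "span_over (Fq q) (*) (teval q f ` S) \<subseteq> teval q f ` span_over (Fq q) (*) S"
  proof
    fix x assume "x \<in> span_over (Fq q) (*) (teval q f ` S)"
    then obtain cs ws where a: "x = sum_list (map2 (*) cs ws)" "length cs = length ws" "set cs \<subseteq> Fq q"
      "set ws \<subseteq> teval q f ` S" unfolding span_over_def by blast
    have "ws \<in> lists (teval q f ` S)" using a(4) by auto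
    then obtain vs where vs: "vs \<in> lists S" "ws = map (teval q f) vs" unfolding lists_image by blast
    have "x = teval q f (sum_list (map2 (*) cs vs))" using a vs map2_teval[of cs vs f] by simp
    moreover have "sum_list (map2 (*) cs vs) \<in> span_over (Fq q) (*) S"
      unfolding span_over_def by (intro CollectI exI[of _ cs] exI[of _ vs]) (use a vs in auto)
    ultimately show "x \<in> teval q f ` span_over (Fq q) (*) S" by blast
  qed
next
  show "teval q f ` span_over (Fq q) (*) S \<subseteq> span_over (Fq q) (*) (teval q f ` S)"
  proof
    fix x assume "x \<in> teval q f ` span_over (Fq q) (*) S"
    then obtain cs vs where a: "x = teval q f (sum_list (map2 (*) cs vs))" "length cs = length vs"
      "set cs \<subseteq> Fq q" "set vs \<subseteq> S" unfolding span_over_def by blast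
    then have "x = sum_list (map2 (*) cs (map (teval q f) vs))" using map2_teval by simp
    then show "x \<in> span_over (Fq q) (*) (teval q f ` S)" unfolding span_over_def using a
      by (intro CollectI exI[of _ cs] exI[of _ "map (teval q f) vs"]) auto
  qed
qed

lemma rank_lb:
  fixes f :: "'f poly" and S :: "'f set"
  assumes "f \<noteq> 0" "card (span_over (Fq q) (*) S) \<ge> q ^ N"
  shows "dim_over (Fq q) (*) (teval q f ` S) + degree f \<ge> N"
proof -
  interpret fm: fmod "Fq q :: 'f set" "(*)" by (rule fmod_mult)
  let ?U = "span_over (Fq q) (*) S"
  let ?L = "teval q f"
  let ?K = "{x\<in>?U. ?L x = 0}"
  have fib: "card {x\<in>?U. ?L x = y} = card ?K" if y: "y \<in> ?L ` ?U" for y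
  proof -
    obtain x0 where x0: "x0 \<in> ?U" "y = ?L x0" using y by blast
    have "{x\<in>?U. ?L x = y} = (\<lambda>z. x0 + z) ` ?K"
    proof (intro set_eqI iffI)
      fix x assume x: "x \<in> {x\<in>?U. ?L x = y}"
      have "x - x0 \<in> ?U" using x x0 fm.span_add fm.span_sc[of "-1"] Fq_neg Fq_1 by (metis (no_types, lifting) mem_Collect_eq diff_conv_add_uminus mult_minus1)
      moreover have "?L (x - x0) = 0" using x x0 by (simp add: teval_xdiff)
      ultimately show "x \<in> (\<lambda>z. x0 + z) ` ?K" by (intro image_eqI[of _ _ "x - x0"]) auto
    next
      fix x assume "x \<in> (\<lambda>z. x0 + z) ` ?K"
      then show "x \<in> {x\<in>?U. ?L x = y}" using x0 fm.span_add by (auto simp: teval_xadd)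
    qed
    moreover have "inj_on (\<lambda>z. x0 + z) ?K" by (auto simp: inj_on_def)
    ultimately show ?thesis by (simp add: card_image)
  qed
  have "card ?U = card (?L ` ?U) * card ?K" by (rule card_fibers) (use fib in auto)
  moreover have "card ?K \<le> q ^ degree f"
  proof -
    have "card ?K \<le> card {x. ?L x = 0}" by (rule card_mono) auto
    then show ?thesis using teval_roots[OF assms(1)] by linarith
  qed
  moreover have "card (?L ` ?U) = q ^ dim_over (Fq q) (*) (?L ` S)"
    using fm.dim_span[of "?L ` S"] cardFq span_image_teval by simp
  ultimately have "q ^ N \<le> q ^ dim_over (Fq q) (*) (?L ` S) * q ^ degree f"
    using assms(2) by (metis mult_le_mono2 order_trans)
  then have "q ^ N \<le> q ^ (dim_over (Fq q) (*) (?L ` S) + degree f)" by (simp add: power_add)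
  then show ?thesis using q2 by (simp add: power_le_imp_le_exp)
qed

end


locale mainl = tw q ty for q :: nat and ty :: "'f::{finite,field} itself" +
  fixes m r \<delta> l s R :: nat and a :: "nat \<Rightarrow> 'f" and \<alpha> :: 'f and \<beta> :: "nat \<Rightarrow> nat \<Rightarrow> 'f"
  assumes card_k: "card (UNIV :: 'f set) = q ^ m"
    and r1: "r \<ge> 1" and \<delta>2: "\<delta> \<ge> 2" and l1: "l \<ge> 1" and C3: "s + 1 \<le> l"
    and R_def: "R = r + \<delta> - 1"
    and a_in: "\<forall>i\<in>{1..l}. a i \<in> Fq q \<and> a i \<noteq> 0"
    and a_inj: "inj_on a {1..l}"
    and \<beta>_basis: "\<forall>i\<in>{1..l}. indep_over (Fq q) (*) (map (\<beta> i) [1..<R+1]) \<and>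
        span_over (Fq q) (*) (\<beta> i ` {1..R}) = torsion q \<alpha> (monom 1 R - [:a i:])"
begin

interpretation fm: fmod "Fq q :: 'f set" "(*)" by (rule fmod_mult)

lemma R1: "R \<ge> 1" using R_def r1 \<delta>2 by simp
lemma rR: "r - 1 < R" using R_def r1 \<delta>2 by simp

definition phiTR where "phiTR = drinfeld q \<alpha> (monom 1 R)"
definition Phi where "Phi x = teval q phiTR x"
definition W where "W i = torsion q \<alpha> (monom 1 R - [:a i:])"
definition B where "B i = \<beta> i ` {1..R}"

abbreviation "T k \<equiv> tpow q [:\<alpha>, 1:] k"

lemma drinfeld_gen: "drinfeld q \<alpha> (monom 1 R - [:c:]) = T R - [:c:]"
proof -
  have e: "monom 1 R - [:c:] = monom 1 R + [:-c:]" by (simp add: diff_conv_add_uminus)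
  have d: "degree (monom (1::'f) R - [:c:]) = R" unfolding e using R1
    by (subst degree_add_eq_left) (auto simp: degree_monom_eq)
  have "drinfeld q \<alpha> (monom 1 R - [:c:]) =
      (\<Sum>i\<le>R. (if i = R then T i else 0) - (if i = 0 then smult c (T i) else 0))"
    unfolding drinfeld_def d
    using R1 by (intro sum.cong refl) (auto simp: coeff_monom smult_diff_left coeff_pCons')
  also have "\<dots> = T R - smult c (T 0)"
    by (simp add: sum_subtractf)
  finally show ?thesis by simp
qed

lemma phiTR_eq: "phiTR = T R"
proof -
  have "phiTR = (\<Sum>i\<le>R. if i = R then T i else 0)"
    unfolding phiTR_def drinfeld_def
    by (intro sum.cong) (auto simp: coeff_monom degree_monom_eq)
  then show ?thesis by simp
qed

lemma degree_phiTR: "degree phiTR \<le> R"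
  unfolding phiTR_eq using degree_tpow_le[of "[:\<alpha>, 1:]" R] by simp

lemma teval_phiTR: "teval q phiTR = Phi"
  by (simp add: Phi_def fun_eq_iff)

lemma W_iff: "x \<in> W i \<longleftrightarrow> Phi x = a i * x"
  unfolding W_def torsion_def drinfeld_gen Phi_def phiTR_eq
  by (simp add: teval_diff teval_const)

lemma Phi_add: "Phi (x + y) = Phi x + Phi y" unfolding Phi_def by (rule teval_xadd)
lemma Phi_scale: "c \<in> Fq q \<Longrightarrow> Phi (c * x) = c * Phi x" unfolding Phi_def by (rule teval_xscale)

lemma a_Fq: "i \<in> {1..l} \<Longrightarrow> a i \<in> Fq q" using a_in by blast

lemma W_span: "i \<in> {1..l} \<Longrightarrow> span_over (Fq q) (*) (B i) = W i"
  using \<beta>_basis by (simp add: B_def W_def)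

lemma B_W: "i \<in> {1..l} \<Longrightarrow> B i \<subseteq> W i"
  using W_span fm.span_sub by blast

lemma card_W: "i \<in> {1..l} \<Longrightarrow> card (W i) = q ^ R"
proof -
  assume i: "i \<in> {1..l}"
  have s: "set (map (\<beta> i) [1..<R+1]) = B i" by (auto simp: B_def)
  have "card (fm.lspan (map (\<beta> i) [1..<R+1])) = card (Fq q :: 'f set) ^ R"
    using fm.card_lspan[of "map (\<beta> i) [1..<R+1]"] \<beta>_basis i R1 by simp
  then show ?thesis using fm.lspan_eq s W_span[OF i] cardFq by simp
qed

lemma Phi_pow: "i \<in> {1..l} \<Longrightarrow> x \<in> W i \<Longrightarrow> (Phi ^^ k) x = a i ^ k * x"
proof (induction k)
  case (Suc k)
  have "(Phi ^^ Suc k) x = Phi (a i ^ k * x)" using Suc by simp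
  also have "\<dots> = a i ^ k * Phi x" using Suc.prems by (intro Phi_scale Fq_power a_Fq)
  also have "\<dots> = a i ^ Suc k * x" using Suc.prems W_iff by (simp add: mult_ac)
  finally show ?case .
qed simp

definition hq :: "(nat \<Rightarrow> 'f) \<Rightarrow> 'f poly" where "hq d = (\<Sum>j<r. monom (d j) j)"
definition Hc :: "(nat \<Rightarrow> nat \<Rightarrow> 'f) \<Rightarrow> nat \<Rightarrow> nat \<Rightarrow> 'f" where "Hc c i j = (\<Sum>k\<le>s. a i ^ k * c k j)"
definition cw :: "(nat \<Rightarrow> nat \<Rightarrow> 'f) \<Rightarrow> nat \<Rightarrow> 'f" where
  "cw c = (\<lambda>n. if n < l * R then teval q (hq (Hc c (n div R + 1))) (\<beta> (n div R + 1) (n mod R + 1)) else 0)"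
definition Psi :: "(nat \<Rightarrow> 'f poly) \<Rightarrow> 'f poly" where
  "Psi g = (\<Sum>k\<le>s. tmult q (g k) (tpow q phiTR k))"

lemma teval_hq: "teval q (hq d) x = (\<Sum>j<r. d j * x ^ (q ^ j))"
  unfolding hq_def by (simp add: teval_sum teval_monom)

lemma hq_cong: "(\<And>j. j < r \<Longrightarrow> d j = d' j) \<Longrightarrow> hq d = hq d'"
  unfolding hq_def by (intro sum.cong) auto

lemma coeff_hq: "j < r \<Longrightarrow> coeff (hq d) j = d j"
proof -
  assume j: "j < r"
  have "coeff (hq d) j = (\<Sum>j'<r. if j' = j then d j' else 0)"
    unfolding hq_def coeff_sum by (intro sum.cong) (auto simp: coeff_monom)
  then show ?thesis using j by simp
qed

lemma degree_hq: "degree (hq d) \<le> r - 1"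
  unfolding hq_def by (intro degree_sum_le order.trans[OF degree_monom_le]) auto

lemma teval_Psi:
  assumes g: "\<forall>k. degree (g k) \<le> r - 1" and i: "i \<in> {1..l}" and x: "x \<in> W i"
  shows "teval q (Psi g) x = teval q (hq (Hc (\<lambda>k j. coeff (g k) j) i)) x"
proof -
  have "teval q (Psi g) x = (\<Sum>k\<le>s. teval q (g k) ((Phi ^^ k) x))"
    unfolding Psi_def by (simp add: teval_sum teval_tmult teval_tpow teval_phiTR)
  also have "\<dots> = (\<Sum>k\<le>s. a i ^ k * teval q (g k) x)"
    by (intro sum.cong refl) (simp add: Phi_pow[OF i x] teval_xscale Fq_power a_Fq[OF i])
  also have "\<dots> = (\<Sum>k\<le>s. a i ^ k * (\<Sum>j<r. coeff (g k) j * x ^ (q ^ j)))"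
  proof (intro sum.cong refl)
    fix k
    have "{..r - 1} = {..<r}" using r1 by auto
    then show "a i ^ k * teval q (g k) x = a i ^ k * (\<Sum>j<r. coeff (g k) j * x ^ (q ^ j))"
      using teval_ext[OF g[rule_format, of k]] by simp
  qed
  also have "\<dots> = (\<Sum>j<r. (\<Sum>k\<le>s. a i ^ k * coeff (g k) j) * x ^ (q ^ j))"
    by (simp add: sum_distrib_left sum_distrib_right mult.assoc sum.swap[of _ "{..s}"])
  finally show ?thesis by (simp add: teval_hq Hc_def)
qed

lemma degree_Psi:
  assumes g: "\<forall>k. degree (g k) \<le> r - 1"
  shows "degree (Psi g) \<le> s * R + (r - 1)"
  unfolding Psi_def
proof (intro degree_sum_le)
  fix k assume k: "k \<in> {..s}"
  have "degree (tpow q phiTR k) \<le> k * R"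
    using degree_tpow_le[of phiTR k] degree_phiTR by (meson mult_le_mono2 order_trans)
  also have "\<dots> \<le> s * R" using k by simp
  moreover have "degree (g k) \<le> r - 1" using g by blast
  ultimately show "degree (tmult q (g k) (tpow q phiTR k)) \<le> s * R + (r - 1)"
    using degree_tmult_le[of "g k" "tpow q phiTR k"] by linarith
qed simp

lemma block:
  assumes "n < l * R"
  shows "n div R + 1 \<in> {1..l}" "n mod R + 1 \<in> {1..R}" "\<beta> (n div R + 1) (n mod R + 1) \<in> B (n div R + 1)"
proof -
  show "n div R + 1 \<in> {1..l}" using assms R1 by (simp add: less_mult_imp_div_less Suc_leI)
  show "n mod R + 1 \<in> {1..R}" using R1 by (simp add: Suc_leI)
  then show "\<beta> (n div R + 1) (n mod R + 1) \<in> B (n div R + 1)" by (simp add: B_def)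
qed

lemma enc_Psi:
  assumes g: "\<forall>k. degree (g k) \<le> r - 1"
  shows "(\<lambda>n. if n < l * R then teval q (Psi g) (\<beta> (n div R + 1) (n mod R + 1)) else 0) = cw (\<lambda>k j. coeff (g k) j)"
  unfolding cw_def
proof (rule ext)
  fix n
  show "(if n < l * R then teval q (Psi g) (\<beta> (n div R + 1) (n mod R + 1)) else 0) =
    (if n < l * R then teval q (hq (Hc (\<lambda>k j. coeff (g k) j) (n div R + 1))) (\<beta> (n div R + 1) (n mod R + 1)) else 0)"
    using teval_Psi[OF g block(1) subsetD[OF B_W[OF block(1)] block(3)]] by simp
qed

lemma C_eq:
  "(\<lambda>f. (\<lambda>n. if n < l * R then teval q f (\<beta> (n div R + 1) (n mod R + 1)) else 0)) `
     {(\<Sum>k\<le>s. tmult q (g k) (tpow q (drinfeld q \<alpha> (monom 1 R)) k)) | g. \<forall>k. degree (g k) \<le> r - 1}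
   = range cw"
proof -
  have "{(\<Sum>k\<le>s. tmult q (g k) (tpow q (drinfeld q \<alpha> (monom 1 R)) k)) | g. \<forall>k. degree (g k) \<le> r - 1}
      = {Psi g | g. \<forall>k. degree (g k) \<le> r - 1}" by (simp add: Psi_def phiTR_def)
  moreover have "(\<lambda>f. (\<lambda>n. if n < l * R then teval q f (\<beta> (n div R + 1) (n mod R + 1)) else 0)) `
     {Psi g | g. \<forall>k. degree (g k) \<le> r - 1} = range cw"
  proof (intro set_eqI iffI)
    fix x assume "x \<in> (\<lambda>f. (\<lambda>n. if n < l * R then teval q f (\<beta> (n div R + 1) (n mod R + 1)) else 0)) `
     {Psi g | g. \<forall>k. degree (g k) \<le> r - 1}"
    then obtain g where "\<forall>k. degree (g k) \<le> r - 1"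
      "x = (\<lambda>n. if n < l * R then teval q (Psi g) (\<beta> (n div R + 1) (n mod R + 1)) else 0)" by blast
    then show "x \<in> range cw" using enc_Psi by auto
  next
    fix x assume "x \<in> range cw"
    then obtain c where x: "x = cw c" by blast
    let ?g = "\<lambda>k. hq (c k)"
    have g: "\<forall>k. degree (?g k) \<le> r - 1" using degree_hq by blast
    have "cw (\<lambda>k j. coeff (?g k) j) = cw c"
      unfolding cw_def Hc_def by (intro ext if_cong refl arg_cong2[where f="teval q"] hq_cong) (simp add: coeff_hq)
    then have "x = (\<lambda>n. if n < l * R then teval q (Psi ?g) (\<beta> (n div R + 1) (n mod R + 1)) else 0)"
      using enc_Psi[OF g] x by simp
    then show "x \<in> (\<lambda>f. (\<lambda>n. if n < l * R then teval q f (\<beta> (n div R + 1) (n mod R + 1)) else 0)) `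
     {Psi g | g. \<forall>k. degree (g k) \<le> r - 1}" using g by blast
  qed
  ultimately show ?thesis by simp
qed

lemma cw_val: "n < l * R \<Longrightarrow> cw c n = (\<Sum>j<r. Hc c (n div R + 1) j * \<beta> (n div R + 1) (n mod R + 1) ^ (q ^ j))"
  by (simp add: cw_def teval_hq)

lemma cw_add: "cw (\<lambda>k j. c k j + c' k j) = cw c + cw c'"
  by (rule ext) (simp add: cw_def teval_hq Hc_def sum.distrib distrib_left distrib_right)

lemma cw_diff: "cw (\<lambda>k j. c k j - c' k j) = cw c - cw c'"
  by (rule ext) (simp add: cw_def teval_hq Hc_def sum_subtractf right_diff_distrib left_diff_distrib)

lemma cw_scale: "cw (\<lambda>k j. u * c k j) = vscale u (cw c)"
  by (rule ext) (simp add: cw_def vscale_def teval_hq Hc_def sum_distrib_left mult_ac)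

lemma cw_0: "cw (\<lambda>k j. 0) = 0"
  by (rule ext) (simp add: cw_def teval_hq Hc_def)

lemma hq_vanish:
  assumes i: "i \<in> {1..l}" and z: "\<forall>x\<in>B i. teval q (hq d) x = 0" and j: "j < r"
  shows "d j = 0"
proof -
  let ?T = "{x. teval q (hq d) x = 0}"
  have "span_over (Fq q) (*) (B i) \<subseteq> ?T"
    by (rule fm.span_minimal) (use z in \<open>auto simp: teval_xadd teval_xscale\<close>)
  then have WT: "W i \<subseteq> ?T" using W_span[OF i] by simp
  have "hq d = 0"
  proof (rule ccontr)
    assume nz: "hq d \<noteq> 0"
    have "q ^ R = card (W i)" using card_W[OF i] by simp
    also have "\<dots> \<le> card ?T" using WT by (intro card_mono) auto
    also have "\<dots> \<le> q ^ degree (hq d)" by (rule teval_roots[OF nz])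
    also have "\<dots> \<le> q ^ (r - 1)" using degree_hq q0 by (intro power_increasing) auto
    finally have "R \<le> r - 1" using q2 by (simp add: power_le_imp_le_exp)
    then show False using rR by simp
  qed
  then show ?thesis using coeff_hq[OF j, of d] by simp
qed

lemma block_idx:
  assumes i: "i \<in> {1..l}" and j: "j \<in> {1..R}"
  shows "(i - 1) * R + (j - 1) < l * R" "((i - 1) * R + (j - 1)) div R + 1 = i"
    "((i - 1) * R + (j - 1)) mod R + 1 = j"
proof -
  have jR: "j - 1 < R" using j by auto
  have "(i - 1) * R + (j - 1) < (i - 1) * R + R" using jR by simp
  also have "\<dots> = i * R" using i by (cases i) auto
  also have "\<dots> \<le> l * R" using i by simp
  finally show "(i - 1) * R + (j - 1) < l * R" .
  show "((i - 1) * R + (j - 1)) div R + 1 = i" using jR i by simp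
  have m: "((i - 1) * R + (j - 1)) mod R = j - 1" by (simp only: mod_mult_self3 mod_less[OF jR])
  show "((i - 1) * R + (j - 1)) mod R + 1 = j" by (subst m) (use j in simp)
qed

lemma cw_block_zero:
  assumes i: "i \<in> {1..l}" and z: "\<forall>j'\<in>{1..R}. cw c ((i - 1) * R + (j' - 1)) = 0"
  shows "\<forall>x\<in>B i. teval q (hq (Hc c i)) x = 0"
proof
  fix x assume "x \<in> B i"
  then obtain j' where j': "j' \<in> {1..R}" "x = \<beta> i j'" by (auto simp: B_def)
  show "teval q (hq (Hc c i)) x = 0"
    using z j' block_idx[OF i j'(1)] unfolding cw_def by (metis (no_types, lifting))
qed

lemma cw_inj0:
  assumes z: "cw c = 0" and k: "k \<le> s" and j: "j < r"
  shows "c k j = 0"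
proof -
  have H: "Hc c i j = 0" if i: "i \<in> {1..l}" for i
    using hq_vanish[OF i cw_block_zero[OF i] j] z by simp
  let ?p = "\<Sum>k\<le>s. monom (c k j) k"
  have root: "poly ?p (a i) = 0" if i: "i \<in> {1..l}" for i
    using H[OF i] by (simp add: poly_sum poly_monom Hc_def mult.commute)
  have "?p = 0"
  proof (rule ccontr)
    assume nz: "?p \<noteq> 0"
    have "a ` {1..l} \<subseteq> {x. poly ?p x = 0}" using root by auto
    then have "card (a ` {1..l}) \<le> card {x. poly ?p x = 0}" by (intro card_mono) auto
    also have "\<dots> \<le> degree ?p" by (rule card_poly_roots_bound[OF nz])
    also have "\<dots> \<le> s" by (intro degree_sum_le order.trans[OF degree_monom_le]) auto
    finally have "l \<le> s" using a_inj by (simp add: card_image)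
    then show False using C3 by simp
  qed
  then have "coeff ?p k = 0" by simp
  moreover have "coeff ?p k = (\<Sum>k'\<le>s. if k' = k then c k' j else 0)"
    unfolding coeff_sum by (intro sum.cong) (auto simp: coeff_monom)
  ultimately show ?thesis using k by simp
qed

definition Dom :: "(nat \<Rightarrow> nat \<Rightarrow> 'f) set" where
  "Dom = {c. \<forall>k j. (s < k \<or> r \<le> j) \<longrightarrow> c k j = 0}"

definition trunc :: "(nat \<Rightarrow> nat \<Rightarrow> 'f) \<Rightarrow> nat \<Rightarrow> nat \<Rightarrow> 'f" where
  "trunc c = (\<lambda>k j. if k \<le> s \<and> j < r then c k j else 0)"

lemma trunc_Dom: "trunc c \<in> Dom" by (auto simp: trunc_def Dom_def)

lemma cw_trunc: "cw (trunc c) = cw c"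
  unfolding cw_def
  by (intro ext if_cong refl arg_cong2[where f="teval q"] hq_cong) (auto simp: Hc_def trunc_def)

lemma range_cw: "range cw = cw ` Dom"
  using cw_trunc trunc_Dom by (auto simp: image_iff) (metis)

lemma cw_inj: "inj_on cw Dom"
proof (rule inj_onI)
  fix c c' assume c: "c \<in> Dom" "c' \<in> Dom" "cw c = cw c'"
  have "cw (\<lambda>k j. c k j - c' k j) = 0" using c by (simp add: cw_diff)
  then have z: "cw (\<lambda>k j. c k j - c' k j) = 0" .
  have "c k j = c' k j" for k j
  proof (cases "k \<le> s \<and> j < r")
    case True
    then have "c k j - c' k j = 0" using cw_inj0[OF z, of k j] by simp
    then show ?thesis by simp
  next
    case False
    then have "s < k \<or> r \<le> j" by auto
    then show ?thesis using c(1,2) unfolding Dom_def by auto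
  qed
  then show "c = c'" by (intro ext)
qed

lemma card_Dom: "card Dom = (q ^ m) ^ ((s + 1) * r)"
proof -
  let ?A = "{..s} \<times> {..<r}"
  define f :: "(nat \<Rightarrow> nat \<Rightarrow> 'f) \<Rightarrow> (nat \<times> nat \<Rightarrow> 'f)" where "f = (\<lambda>c. restrict (\<lambda>(k, j). c k j) ?A)"
  define f' :: "(nat \<times> nat \<Rightarrow> 'f) \<Rightarrow> (nat \<Rightarrow> nat \<Rightarrow> 'f)" where "f' = (\<lambda>d k j. if (k, j) \<in> ?A then d (k, j) else 0)"
  have h1: "\<forall>c\<in>Dom. f' (f c) = c"
    by (auto simp: Dom_def fun_eq_iff f_def f'_def restrict_def)
  have h2: "\<forall>d\<in>PiE ?A (\<lambda>_. UNIV). f (f' d) = d"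
    by (auto simp: fun_eq_iff PiE_def extensional_def restrict_def f_def f'_def)
  have h3: "f ` Dom \<subseteq> PiE ?A (\<lambda>_. UNIV)" by (auto simp: f_def PiE_iff extensional_def split: if_split_asm)
  have h4: "f' ` PiE ?A (\<lambda>_. UNIV) \<subseteq> Dom" by (auto simp: Dom_def f'_def)
  have "bij_betw f Dom (PiE ?A (\<lambda>_. UNIV))" by (rule bij_betw_byWitness[OF h1 h2 h3 h4])
  then have "card Dom = card (PiE ?A (\<lambda>_. UNIV :: 'f set))" by (rule bij_betw_same_card)
  also have "\<dots> = (q ^ m) ^ card ?A" by (simp add: card_PiE card_k)
  also have "card ?A = (s + 1) * r" by (simp add: card_cartesian_product)
  finally show ?thesis .
qed

lemma finite_Dom: "finite Dom"
  using card_Dom q0 card_ge_0_finite by (metis gr0I power_not_zero)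

lemma card_C: "card (range cw) = q ^ (m * ((s + 1) * r))"
  using range_cw card_image[OF cw_inj] card_Dom by (simp add: power_mult)

lemma finite_C: "finite (range cw)"
  using range_cw finite_Dom by simp

lemma subspace_C: "subspace_over (Fq q) vscale (range cw)"
  unfolding subspace_over_def
proof (intro conjI ballI)
  show "0 \<in> range cw" using cw_0 rangeI[of cw "\<lambda>k j. 0"] by simp
  fix x y assume "x \<in> range cw" "y \<in> range cw"
  then obtain c c' where "x = cw c" "y = cw c'" by blast
  then have "x + y = cw (\<lambda>k j. c k j + c' k j)" using cw_add[of c c'] by simp
  then show "x + y \<in> range cw" by simp
next
  fix u x assume "x \<in> range cw"
  then obtain c where "x = cw c" by blast
  then have "vscale u x = cw (\<lambda>k j. u * c k j)" using cw_scale[of u c] by simp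
  then show "vscale u x \<in> range cw" by simp
qed

lemma dim_C: "dim_over (Fq q) vscale (range cw) = m * ((s + 1) * r)"
proof -
  interpret fv: fmod "Fq q :: 'f set" "vscale :: 'f \<Rightarrow> (nat \<Rightarrow> 'f) \<Rightarrow> (nat \<Rightarrow> 'f)" by (rule fmod_vscale)
  have "q ^ dim_over (Fq q) vscale (range cw) = q ^ (m * ((s + 1) * r))"
    using fv.dim_subspace[OF subspace_C finite_C] cardFq card_C by simp
  then show ?thesis using q2 by (simp add: power_inject_exp)
qed

end


context mainl
begin

interpretation fm: fmod "Fq q :: 'f set" "(*)" by (rule fmod_mult)

lemma Phi_diff: "Phi (x - y) = Phi x - Phi y" unfolding Phi_def by (rule teval_xdiff)

primrec G :: "nat \<Rightarrow> 'f \<Rightarrow> 'f" where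
  "G 0 x = x"
| "G (Suc j) x = Phi (G j x) - a (Suc j) * G j x"

lemma G_0 [simp]: "G j 0 = 0"
  by (induction j) (simp_all add: Phi_def)

lemma G_add: "G j (x + y) = G j x + G j y"
  by (induction j) (simp_all add: Phi_add algebra_simps)

lemma G_scale: "c \<in> Fq q \<Longrightarrow> G j (c * x) = c * G j x"
  by (induction j) (simp_all add: Phi_scale algebra_simps)

lemma G_W:
  assumes t: "t \<in> {1..l}" and x: "x \<in> W t"
  shows "j \<le> l \<Longrightarrow> G j x = (\<Prod>i=1..j. a t - a i) * x"
proof (induction j)
  case (Suc j)
  let ?c = "\<Prod>i=1..j. a t - a i"
  have cF: "?c \<in> Fq q" using Suc.prems t by (intro Fq_prod Fq_diff a_Fq) auto
  have "G (Suc j) x = Phi (?c * x) - a (Suc j) * (?c * x)" using Suc by simp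
  also have "\<dots> = ?c * (a t * x) - a (Suc j) * (?c * x)" using Phi_scale[OF cF] x W_iff by simp
  also have "\<dots> = (?c * (a t - a (Suc j))) * x" by (simp add: algebra_simps)
  finally show ?case by simp
qed simp

definition S :: "nat \<Rightarrow> 'f set" where "S j = span_over (Fq q) (*) (\<Union>i\<in>{1..j}. B i)"

lemma S_kill: "j \<le> l \<Longrightarrow> S j \<subseteq> {x. G j x = 0}"
  unfolding S_def
proof (rule fm.span_minimal)
  assume j: "j \<le> l"
  show "(\<Union>i\<in>{1..j}. B i) \<subseteq> {x. G j x = 0}"
  proof
    fix x assume "x \<in> (\<Union>i\<in>{1..j}. B i)"
    then obtain i where i: "i \<in> {1..j}" "x \<in> B i" by blast
    have il: "i \<in> {1..l}" using i j by auto
    have "G j x = (\<Prod>i'=1..j. a i - a i') * x" using G_W[OF il subsetD[OF B_W[OF il] i(2)] j] .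
    moreover have "(\<Prod>i'=1..j. a i - a i') = 0" using i(1) by (intro prod_zero) auto
    ultimately show "x \<in> {x. G j x = 0}" by simp
  qed
qed (auto simp: G_add G_scale)

lemma direct:
  assumes "j < t" "t \<le> l" "u \<in> S j" "u \<in> W t"
  shows "u = 0"
proof -
  have t: "t \<in> {1..l}" using assms by auto
  have jl: "j \<le> l" using assms by simp
  have "G j u = 0" using S_kill[OF jl] assms(3) by blast
  moreover have "G j u = (\<Prod>i=1..j. a t - a i) * u" using G_W[OF t assms(4)] assms by simp
  moreover have "(\<Prod>i=1..j. a t - a i) \<noteq> 0"
  proof -
    have "a t - a i \<noteq> 0" if ii: "i \<in> {1..j}" for i
    proof -
      have "i \<in> {1..l}" "i \<noteq> t" using ii assms by auto
      then have "a i \<noteq> a t" using inj_onD[OF a_inj _ _ t] by blast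
      then show ?thesis by simp
    qed
    then show ?thesis by simp
  qed
  ultimately show ?thesis by simp
qed

lemma span_union:
  fixes X Y :: "'f set"
  shows "span_over (Fq q) (*) (X \<union> Y) = {u + w | u w. u \<in> span_over (Fq q) (*) X \<and> w \<in> span_over (Fq q) (*) Y}"
proof
  show "{u + w | u w. u \<in> span_over (Fq q) (*) X \<and> w \<in> span_over (Fq q) (*) Y} \<subseteq> span_over (Fq q) (*) (X \<union> Y)"
    using fm.span_mono[of X "X \<union> Y"] fm.span_mono[of Y "X \<union> Y"] fm.span_add by blast
  show "span_over (Fq q) (*) (X \<union> Y) \<subseteq> {u + w | u w. u \<in> span_over (Fq q) (*) X \<and> w \<in> span_over (Fq q) (*) Y}"
  proof (rule fm.span_minimal)
    show "X \<union> Y \<subseteq> {u + w | u w. u \<in> span_over (Fq q) (*) X \<and> w \<in> span_over (Fq q) (*) Y}"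
    proof
      fix z assume "z \<in> X \<union> Y"
      then show "z \<in> {u + w | u w. u \<in> span_over (Fq q) (*) X \<and> w \<in> span_over (Fq q) (*) Y}"
      proof
        assume "z \<in> X"
        then show ?thesis using fm.span_sub fm.span_0 by (intro CollectI exI[of _ z] exI[of _ 0]) auto
      next
        assume "z \<in> Y"
        then show ?thesis using fm.span_sub fm.span_0 by (intro CollectI exI[of _ 0] exI[of _ z]) auto
      qed
    qed
    show "0 \<in> {u + w | u w. u \<in> span_over (Fq q) (*) X \<and> w \<in> span_over (Fq q) (*) Y}"
      using fm.span_0 by (intro CollectI exI[of _ 0] exI[of _ 0]) auto
  next
    fix z z' assume "z \<in> {u + w | u w. u \<in> span_over (Fq q) (*) X \<and> w \<in> span_over (Fq q) (*) Y}"
      "z' \<in> {u + w | u w. u \<in> span_over (Fq q) (*) X \<and> w \<in> span_over (Fq q) (*) Y}"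
    then obtain u w u' w' where "z = u + w" "z' = u' + w'" "u \<in> span_over (Fq q) (*) X" "w \<in> span_over (Fq q) (*) Y"
      "u' \<in> span_over (Fq q) (*) X" "w' \<in> span_over (Fq q) (*) Y" by blast
    then show "z + z' \<in> {u + w | u w. u \<in> span_over (Fq q) (*) X \<and> w \<in> span_over (Fq q) (*) Y}"
      using fm.span_add by (intro CollectI exI[of _ "u + u'"] exI[of _ "w + w'"]) (auto simp: algebra_simps)
  next
    fix c z :: 'f assume c: "c \<in> Fq q" and "z \<in> {u + w | u w. u \<in> span_over (Fq q) (*) X \<and> w \<in> span_over (Fq q) (*) Y}"
    then obtain u w where uw: "z = u + w" "u \<in> span_over (Fq q) (*) X" "w \<in> span_over (Fq q) (*) Y" by blast
    have "c * z = c * u + c * w" using uw by (simp add: distrib_left)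
    moreover have "c * u \<in> span_over (Fq q) (*) X" by (rule fm.span_sc[OF c uw(2)])
    moreover have "c * w \<in> span_over (Fq q) (*) Y" by (rule fm.span_sc[OF c uw(3)])
    ultimately show "c * z \<in> {u + w | u w. u \<in> span_over (Fq q) (*) X \<and> w \<in> span_over (Fq q) (*) Y}"
      by blast
  qed
qed

lemma span_diff: fixes X :: "'f set" shows "x \<in> span_over (Fq q) (*) X \<Longrightarrow> y \<in> span_over (Fq q) (*) X \<Longrightarrow> x - y \<in> span_over (Fq q) (*) X"
proof -
  assume x: "x \<in> span_over (Fq q) (*) X" and y: "y \<in> span_over (Fq q) (*) X"
  have "(-1) * y \<in> span_over (Fq q) (*) X" by (rule fm.span_sc[OF Fq_neg[OF Fq_1] y])
  then have "x + (-1) * y \<in> span_over (Fq q) (*) X" by (rule fm.span_add[OF x])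
  then show ?thesis by simp
qed

lemma card_S: "j \<le> l \<Longrightarrow> card (S j) = q ^ (j * R)"
proof (induction j)
  case 0
  have "S 0 \<subseteq> {0}" unfolding S_def by (rule fm.span_minimal) auto
  then have "S 0 = {0}" using fm.span_0 unfolding S_def by blast
  then show ?case by simp
next
  case (Suc j)
  have t: "Suc j \<in> {1..l}" using Suc.prems by auto
  have "(\<Union>i\<in>{1..Suc j}. B i) = (\<Union>i\<in>{1..j}. B i) \<union> B (Suc j)"
    by (auto simp: atLeastAtMostSuc_conv)
  then have SS: "S (Suc j) = {u + w | u w. u \<in> S j \<and> w \<in> W (Suc j)}"
    unfolding S_def using span_union W_span[OF t] by simp
  have "S (Suc j) = (\<lambda>(u, w). u + w) ` (S j \<times> W (Suc j))" unfolding SS by auto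
  moreover have "inj_on (\<lambda>(u, w). u + w) (S j \<times> W (Suc j))"
  proof (rule inj_onI, clarify)
    fix u w u' w' assume a: "u \<in> S j" "w \<in> W (Suc j)" "u' \<in> S j" "w' \<in> W (Suc j)" "u + w = u' + w'"
    have h1: "u - u' \<in> S j" using a span_diff unfolding S_def by blast
    have h2: "u - u' \<in> W (Suc j)"
    proof -
      have "u - u' = w' - w" using a(5) by (simp add: algebra_simps)
      moreover have "w' - w \<in> W (Suc j)" using a(2,4) W_iff Phi_diff
        by (simp add: right_diff_distrib)
      ultimately show ?thesis by simp
    qed
    have "u - u' = 0" by (rule direct[of j "Suc j"]) (use Suc.prems h1 h2 in auto)
    then show "u = u' \<and> w = w'" using a(5) by simp
  qed
  ultimately have "card (S (Suc j)) = card (S j) * card (W (Suc j))"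
    by (simp add: card_image card_cartesian_product)
  then show ?case using Suc card_W[OF t] by (simp add: power_add)
qed

end


lemma card_supp:
  assumes "finite A"
  shows "card {f :: 'x \<Rightarrow> 'y::{zero,finite}. \<forall>x. x \<notin> A \<longrightarrow> f x = 0} = card (UNIV :: 'y set) ^ card A"
proof -
  let ?D = "{f :: 'x \<Rightarrow> 'y. \<forall>x. x \<notin> A \<longrightarrow> f x = 0}"
  define f :: "('x \<Rightarrow> 'y) \<Rightarrow> ('x \<Rightarrow> 'y)" where "f = (\<lambda>c. restrict c A)"
  define f' :: "('x \<Rightarrow> 'y) \<Rightarrow> ('x \<Rightarrow> 'y)" where "f' = (\<lambda>d x. if x \<in> A then d x else 0)"
  have h1: "\<forall>c\<in>?D. f' (f c) = c" by (auto simp: fun_eq_iff f_def f'_def restrict_def)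
  have h2: "\<forall>d\<in>PiE A (\<lambda>_. UNIV). f (f' d) = d"
    by (auto simp: fun_eq_iff PiE_def extensional_def restrict_def f_def f'_def)
  have h3: "f ` ?D \<subseteq> PiE A (\<lambda>_. UNIV)" by (auto simp: f_def PiE_iff extensional_def split: if_split_asm)
  have h4: "f' ` PiE A (\<lambda>_. UNIV) \<subseteq> ?D" by (auto simp: f'_def)
  have "bij_betw f ?D (PiE A (\<lambda>_. UNIV))" by (rule bij_betw_byWitness[OF h1 h2 h3 h4])
  then have "card ?D = card (PiE A (\<lambda>_. UNIV :: 'y set))" by (rule bij_betw_same_card)
  also have "\<dots> = card (UNIV :: 'y set) ^ card A" using assms by (simp add: card_PiE)
  finally show ?thesis .
qed

context mainl
begin

interpretation fm: fmod "Fq q :: 'f set" "(*)" by (rule fmod_mult)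

lemma cw_hq: "cw (\<lambda>k j. coeff (hq (c k)) j) = cw c"
  unfolding cw_def Hc_def by (intro ext if_cong refl arg_cong2[where f="teval q"] hq_cong) (simp add: coeff_hq)

lemma cw_teval: "\<exists>f. degree f \<le> s * R + (r - 1) \<and> (\<forall>n < l * R. cw c n = teval q f (\<beta> (n div R + 1) (n mod R + 1)))"
proof -
  let ?g = "\<lambda>k. hq (c k)"
  have g: "\<forall>k. degree (?g k) \<le> r - 1" using degree_hq by blast
  have e: "(\<lambda>n. if n < l * R then teval q (Psi ?g) (\<beta> (n div R + 1) (n mod R + 1)) else 0) = cw c"
    using enc_Psi[OF g] cw_hq[of c] by simp
  have "\<forall>n < l * R. cw c n = teval q (Psi ?g) (\<beta> (n div R + 1) (n mod R + 1))"
  proof (intro allI impI)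
    fix n assume "n < l * R"
    then show "cw c n = teval q (Psi ?g) (\<beta> (n div R + 1) (n mod R + 1))" using fun_cong[OF e, of n] by simp
  qed
  then show ?thesis using degree_Psi[OF g] by blast
qed

definition Ball where "Ball = (\<Union>i\<in>{1..l}. B i)"

lemma idx_image: "(\<lambda>n. \<beta> (n div R + 1) (n mod R + 1)) ` {..<l * R} = Ball"
proof
  show "(\<lambda>n. \<beta> (n div R + 1) (n mod R + 1)) ` {..<l * R} \<subseteq> Ball"
    using block unfolding Ball_def by blast
  show "Ball \<subseteq> (\<lambda>n. \<beta> (n div R + 1) (n mod R + 1)) ` {..<l * R}"
  proof
    fix x assume "x \<in> Ball"
    then obtain i j where ij: "i \<in> {1..l}" "j \<in> {1..R}" "x = \<beta> i j" unfolding Ball_def B_def by blast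
    have e: "(\<lambda>n. \<beta> (n div R + 1) (n mod R + 1)) ((i - 1) * R + (j - 1)) = x"
      by (simp only: block_idx(2)[OF ij(1,2)] block_idx(3)[OF ij(1,2)] ij(3))
    have "(i - 1) * R + (j - 1) \<in> {..<l * R}" using block_idx(1)[OF ij(1,2)] by simp
    then show "x \<in> (\<lambda>n. \<beta> (n div R + 1) (n mod R + 1)) ` {..<l * R}"
      by (rule image_eqI[where f="\<lambda>n. \<beta> (n div R + 1) (n mod R + 1)" and x="(i - 1) * R + (j - 1)", OF e[symmetric]])
  qed
qed

lemma card_span_Ball: "card (span_over (Fq q) (*) Ball) = q ^ (l * R)"
  using card_S[of l] by (simp add: S_def Ball_def)

lemma lower:
  assumes nz: "cw c \<noteq> 0"
  shows "rank_wt q (l * R) (cw c) + (s * R + (r - 1)) \<ge> l * R"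
proof -
  obtain f where f: "degree f \<le> s * R + (r - 1)" "\<forall>n < l * R. cw c n = teval q f (\<beta> (n div R + 1) (n mod R + 1))"
    using cw_teval by blast
  have img: "cw c ` {..<l * R} = teval q f ` Ball"
  proof -
    have "cw c ` {..<l * R} = teval q f ` ((\<lambda>n. \<beta> (n div R + 1) (n mod R + 1)) ` {..<l * R})"
      using f(2) by (auto simp: image_iff)
    then show ?thesis by (simp only: idx_image)
  qed
  have "f \<noteq> 0"
  proof
    assume "f = 0"
    then have "cw c n = 0" for n using f(2) by (cases "n < l * R") (auto simp: cw_def)
    then show False using nz by auto
  qed
  then have "dim_over (Fq q) (*) (teval q f ` Ball) + degree f \<ge> l * R"
    by (rule rank_lb) (simp add: card_span_Ball)
  then show ?thesis using img f(1) unfolding rank_wt_def by simp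
qed

lemma Hc_diff: "Hc (\<lambda>k j. c k j - c' k j) i j = Hc c i j - Hc c' i j"
  by (simp add: Hc_def sum_subtractf right_diff_distrib)

lemma hq_zero: "hq (\<lambda>_. 0) = 0" by (simp add: hq_def)

lemma upper:
  "\<exists>c c'. cw c \<noteq> cw c' \<and> rank_wt q (l * R) (cw c - cw c') + (s * R + (r - 1)) \<le> l * R"
proof -
  define A1 where "A1 = {1..s} \<times> {..<r}"
  define A2 where "A2 = {1..r - 1}"
  define D1 where "D1 = {e :: nat \<times> nat \<Rightarrow> 'f. \<forall>x. x \<notin> A1 \<longrightarrow> e x = 0}"
  define D2 where "D2 = {v :: nat \<Rightarrow> 'f. \<forall>x. x \<notin> A2 \<longrightarrow> v x = 0}"
  define P where "P c = ((\<lambda>(i, j). if (i, j) \<in> A1 then Hc c i j else 0),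
                        (\<lambda>t. if t \<in> A2 then cw c (s * R + t - 1) else 0))" for c
  have cD1: "card D1 = (q ^ m) ^ (s * r)" unfolding D1_def
    using card_supp[of A1, where 'y='f] card_k by (simp add: A1_def card_cartesian_product)
  have cD2: "card D2 = (q ^ m) ^ (r - 1)" unfolding D2_def
    using card_supp[of A2, where 'y='f] card_k by (simp add: A2_def)
  have cD: "card (D1 \<times> D2) = q ^ (m * (s * r + (r - 1)))"
    using cD1 cD2 by (simp add: card_cartesian_product power_mult power_add)
  have finD: "finite (D1 \<times> D2)" using cD q0 by (metis card_ge_0_finite gr0I power_not_zero)
  have PD: "P ` Dom \<subseteq> D1 \<times> D2" by (auto simp: P_def D1_def D2_def)
  have m1: "m \<ge> 1"
  proof (rule ccontr)
    assume "\<not> m \<ge> 1"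
    then have "card (UNIV :: 'f set) = 1" using card_k by simp
    moreover have "card {0::'f, 1} \<le> card (UNIV :: 'f set)" by (rule card_mono) auto
    ultimately show False by simp
  qed
  have "card (D1 \<times> D2) < card Dom"
  proof -
    have "s * r + (r - 1) < (s + 1) * r" using r1 by simp
    then have "m * (s * r + (r - 1)) < m * ((s + 1) * r)" by (rule mult_strict_left_mono) (use m1 in simp)
    then have "q ^ (m * (s * r + (r - 1))) < q ^ (m * ((s + 1) * r))"
      by (rule power_strict_increasing) (use q2 in simp)
    then show ?thesis using cD card_Dom by (simp add: power_mult)
  qed
  then have "\<not> inj_on P Dom" using card_inj_on_le[OF _ PD finD] by linarith
  then obtain c c' where cc: "c \<in> Dom" "c' \<in> Dom" "c \<noteq> c'" "P c = P c'" unfolding inj_on_def by blast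
  define d where "d = (\<lambda>k j. c k j - c' k j)"
  have cwd: "cw d = cw c - cw c'" unfolding d_def by (rule cw_diff)
  have ne: "cw c \<noteq> cw c'" using cw_inj cc unfolding inj_on_def by blast
  have Hz: "Hc d i j = 0" if "i \<in> {1..s}" "j < r" for i j
  proof -
    have "(\<lambda>(i, j). if (i, j) \<in> A1 then Hc c i j else 0) (i, j) = (\<lambda>(i, j). if (i, j) \<in> A1 then Hc c' i j else 0) (i, j)"
      using cc(4) unfolding P_def by simp
    then show ?thesis using that unfolding d_def Hc_diff by (simp add: A1_def)
  qed
  have Cz: "cw d (s * R + t - 1) = 0" if "t \<in> {1..r - 1}" for t
  proof -
    have "snd (P c) t = snd (P c') t" using cc(4) by simp
    then have "cw c (s * R + t - 1) = cw c' (s * R + t - 1)" using that by (simp add: P_def A2_def)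
    then show ?thesis using cwd by simp
  qed
  have bound: "s * R + (r - 1) \<le> l * R"
  proof -
    have "s * R + (r - 1) \<le> s * R + R" using rR by simp
    also have "\<dots> = (s + 1) * R" by simp
    also have "\<dots> \<le> l * R" by (rule mult_right_mono) (use C3 in simp_all)
    finally show ?thesis .
  qed
  have sub: "cw d ` {..<l * R} - {0} \<subseteq> cw d ` {s * R + (r - 1)..<l * R}"
  proof
    fix y assume "y \<in> cw d ` {..<l * R} - {0}"
    then obtain n where n: "n < l * R" "y = cw d n" "y \<noteq> 0" by blast
    have "\<not> n < s * R"
    proof
      assume ns: "n < s * R"
      then have i: "n div R + 1 \<in> {1..s}" using R1 by (simp add: less_mult_imp_div_less Suc_leI)
      have "hq (Hc d (n div R + 1)) = hq (\<lambda>_. 0)" by (rule hq_cong) (use Hz[OF i] in simp)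
      then have "cw d n = 0" using n(1) by (simp add: cw_def hq_zero)
      then show False using n by simp
    qed
    moreover have "\<not> (s * R \<le> n \<and> n < s * R + (r - 1))"
    proof
      assume ns: "s * R \<le> n \<and> n < s * R + (r - 1)"
      then have t: "n - s * R + 1 \<in> {1..r - 1}" by auto
      have "s * R + (n - s * R + 1) - 1 = n" using ns by simp
      then have "cw d n = 0" using Cz[OF t] by simp
      then show False using n by simp
    qed
    ultimately show "y \<in> cw d ` {s * R + (r - 1)..<l * R}" using n by auto
  qed
  have "rank_wt q (l * R) (cw d) \<le> card (cw d ` {..<l * R} - {0})"
    unfolding rank_wt_def by (rule fm.dim_le_card) auto
  also have "\<dots> \<le> card (cw d ` {s * R + (r - 1)..<l * R})" using sub by (intro card_mono) auto
  also have "\<dots> \<le> card {s * R + (r - 1)..<l * R}" by (rule card_image_le) simp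
  also have "\<dots> = l * R - (s * R + (r - 1))" by simp
  finally have "rank_wt q (l * R) (cw d) + (s * R + (r - 1)) \<le> l * R" using bound by linarith
  then show ?thesis using ne cwd by metis
qed

end


context mainl
begin

interpretation fm: fmod "Fq q :: 'f set" "(*)" by (rule fmod_mult)

lemma locality: "rank_locality q (l * R) (range cw) r \<delta>"
  unfolding rank_locality_def
proof (intro allI impI)
  fix i0 assume i0: "i0 < l * R"
  define b where "b = i0 div R + 1"
  have b: "b \<in> {1..l}" using block(1)[OF i0] by (simp add: b_def)
  define \<Gamma> where "\<Gamma> = (\<lambda>j'. (b - 1) * R + (j' - 1)) ` {1..R}"
  have "i0 \<in> \<Gamma>"
  proof -
    have "(b - 1) * R + ((i0 mod R + 1) - 1) = i0" by (simp add: b_def)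
    moreover have "i0 mod R + 1 \<in> {1..R}" using block(2)[OF i0] .
    ultimately show ?thesis unfolding \<Gamma>_def by (metis image_eqI)
  qed
  moreover have "\<Gamma> \<subseteq> {..<l * R}" using block_idx(1)[OF b] unfolding \<Gamma>_def by auto
  moreover have "card \<Gamma> \<le> r + \<delta> - 1"
    unfolding \<Gamma>_def using card_image_le[of "{1..R}" "\<lambda>j'. (b - 1) * R + (j' - 1)"] R_def by simp
  moreover have "\<forall>x\<in>range cw. \<forall>y\<in>range cw. (\<exists>j\<in>\<Gamma>. x j \<noteq> y j) \<longrightarrow> dim_over (Fq q) (*) ((x - y) ` \<Gamma>) \<ge> \<delta>"
  proof (intro ballI impI)
    fix x y assume x: "x \<in> range cw" and y: "y \<in> range cw" and ex: "\<exists>j\<in>\<Gamma>. x j \<noteq> y j"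
    obtain c c' where cc: "x = cw c" "y = cw c'" using x y by blast
    define d where "d = (\<lambda>k j. c k j - c' k j)"
    have xy: "x - y = cw d" unfolding d_def cc by (rule cw_diff[symmetric])
    define h where "h = hq (Hc d b)"
    have val: "cw d ((b - 1) * R + (j' - 1)) = teval q h (\<beta> b j')" if j': "j' \<in> {1..R}" for j'
      unfolding cw_def h_def
      by (simp only: block_idx(1)[OF b j'] block_idx(2)[OF b j'] block_idx(3)[OF b j'] if_True)
    have img: "(x - y) ` \<Gamma> = teval q h ` B b"
    proof -
      have "(x - y) ` \<Gamma> = (\<lambda>j'. cw d ((b - 1) * R + (j' - 1))) ` {1..R}"
        unfolding xy \<Gamma>_def by (simp add: image_image)
      also have "\<dots> = (\<lambda>j'. teval q h (\<beta> b j')) ` {1..R}" using val by (intro image_cong) auto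
      also have "\<dots> = teval q h ` B b" unfolding B_def by (simp add: image_image)
      finally show ?thesis .
    qed
    have "h \<noteq> 0"
    proof
      assume "h = 0"
      then have "(x - y) ` \<Gamma> \<subseteq> {0}" using img by auto
      then show False using ex by auto
    qed
    then have "dim_over (Fq q) (*) (teval q h ` B b) + degree h \<ge> R"
      by (rule rank_lb) (simp add: W_span[OF b] card_W[OF b])
    moreover have "degree h \<le> r - 1" unfolding h_def by (rule degree_hq)
    ultimately show "dim_over (Fq q) (*) ((x - y) ` \<Gamma>) \<ge> \<delta>" using img R_def r1 by simp
  qed
  ultimately show "\<exists>\<Gamma>. i0 \<in> \<Gamma> \<and> \<Gamma> \<subseteq> {..<l * R} \<and> card \<Gamma> \<le> r + \<delta> - 1 \<and>
      (\<forall>x\<in>range cw. \<forall>y\<in>range cw. (\<exists>j\<in>\<Gamma>. x j \<noteq> y j) \<longrightarrow> dim_over (Fq q) (*) ((x - y) ` \<Gamma>) \<ge> \<delta>)"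
    by blast
qed

lemma min_dist: "min_rank_dist q (l * R) (range cw) = l * R - (s * R + (r - 1))"
proof -
  let ?D = "l * R - (s * R + (r - 1))"
  let ?X = "{rank_wt q (l * R) (x - y) | x y. x \<in> range cw \<and> y \<in> range cw \<and> x \<noteq> y}"
  have bound: "s * R + (r - 1) \<le> l * R"
  proof -
    have "s * R + (r - 1) \<le> s * R + R" using rR by simp
    also have "\<dots> = (s + 1) * R" by simp
    also have "\<dots> \<le> l * R" by (rule mult_right_mono) (use C3 in simp_all)
    finally show ?thesis .
  qed
  have lb: "e \<ge> ?D" if eX: "e \<in> ?X" for e
  proof -
    obtain x y where xy: "e = rank_wt q (l * R) (x - y)" "x \<in> range cw" "y \<in> range cw" "x \<noteq> y"
      using eX by blast
    obtain c c' where cc: "x = cw c" "y = cw c'" using xy by blast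
    have "x - y = cw (\<lambda>k j. c k j - c' k j)" unfolding cc by (rule cw_diff[symmetric])
    moreover have "x - y \<noteq> 0" using xy by simp
    ultimately have "rank_wt q (l * R) (x - y) + (s * R + (r - 1)) \<ge> l * R" using lower by metis
    then show ?thesis using xy by linarith
  qed
  obtain c c' where cc: "cw c \<noteq> cw c'" "rank_wt q (l * R) (cw c - cw c') + (s * R + (r - 1)) \<le> l * R"
    using upper by blast
  have mem: "rank_wt q (l * R) (cw c - cw c') \<in> ?X" using cc(1) by blast
  then have "rank_wt q (l * R) (cw c - cw c') = ?D" using lb[OF mem] cc(2) by linarith
  then have memD: "?D \<in> ?X" using mem by simp
  have fin: "finite ?X"
  proof -
    have "?X \<subseteq> (\<lambda>p. rank_wt q (l * R) (fst p - snd p)) ` (range cw \<times> range cw)"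
    proof
      fix e assume "e \<in> ?X"
      then obtain x y where "e = rank_wt q (l * R) (x - y)" "x \<in> range cw" "y \<in> range cw" by blast
      then show "e \<in> (\<lambda>p. rank_wt q (l * R) (fst p - snd p)) ` (range cw \<times> range cw)"
        by (intro image_eqI[where x="(x, y)"]) auto
    qed
    moreover have "finite (range cw \<times> range cw)" using finite_C by simp
    ultimately show ?thesis by (meson finite_imageI finite_subset)
  qed
  show ?thesis unfolding min_rank_dist_def by (rule Min_eqI[OF fin lb memD])
qed

lemma final:
  "subspace_over (Fq q) vscale (range cw)
    \<and> dim_over (Fq q) vscale (range cw) = m * ((s + 1) * r)
    \<and> int (min_rank_dist q (l * R) (range cw)) = int (l * R) - int (R * s) - int r + 1
    \<and> rank_locality q (l * R) (range cw) r \<delta>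
    \<and> int (min_rank_dist q (l * R) (range cw)) = int (l * R) - int ((s + 1) * r) + 1 - (\<lceil>real ((s + 1) * r) / real r\<rceil> - 1) * (int \<delta> - 1)"
proof -
  have bound: "s * R + (r - 1) \<le> l * R"
  proof -
    have "s * R + (r - 1) \<le> s * R + R" using rR by simp
    also have "\<dots> = (s + 1) * R" by simp
    also have "\<dots> \<le> l * R" by (rule mult_right_mono) (use C3 in simp_all)
    finally show ?thesis .
  qed
  have e1: "int (min_rank_dist q (l * R) (range cw)) = int (l * R) - int (R * s) - int r + 1"
    using min_dist bound r1 by (simp add: of_nat_diff mult.commute)
  have "real ((s + 1) * r) / real r = of_nat (s + 1)"
    by (subst of_nat_mult) (use r1 in simp)
  then have ceil: "\<lceil>real ((s + 1) * r) / real r\<rceil> = int (s + 1)"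
    by (simp only: ceiling_of_nat)
  have Ri: "int R = int r + int \<delta> - 1" using R_def \<delta>2 by simp
  have e2: "int (l * R) - int (R * s) - int r + 1 = int (l * R) - int ((s + 1) * r) + 1 - (\<lceil>real ((s + 1) * r) / real r\<rceil> - 1) * (int \<delta> - 1)"
    by (subst ceil) (simp add: Ri algebra_simps)
  show ?thesis using subspace_C dim_C e1 e2 locality by simp
qed

end


theorem theorem3p4:
  fixes q m r \<delta> l s :: nat
    and a :: "nat \<Rightarrow> 'f::{finite,field}"
    and P :: "'f poly" and \<alpha> :: 'f
    and \<beta> :: "nat \<Rightarrow> nat \<Rightarrow> 'f"
  defines "R \<equiv> r + \<delta> - 1"
  defines "h \<equiv> (\<Prod>i=1..l. monom 1 R - [:a i:])"
  defines "\<phi>TR \<equiv> drinfeld q \<alpha> (monom 1 R)"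
  defines "M \<equiv> {(\<Sum>k\<le>s. tmult q (g k) (tpow q \<phi>TR k)) | g. \<forall>k. degree (g k) \<le> r - 1}"
  defines "enc \<equiv> (\<lambda>f. (\<lambda>n. if n < l * R then teval q f (\<beta> (n div R + 1) (n mod R + 1)) else 0))"
  defines "C \<equiv> enc ` M"
  defines "n \<equiv> l * R"
  defines "k \<equiv> (s + 1) * r"
  assumes q_pp: "\<exists>p e. prime p \<and> e > 0 \<and> q = p ^ e"
    and card_k: "card (UNIV :: 'f set) = q ^ m"
    and r1: "r \<ge> 1" and \<delta>2: "\<delta> \<ge> 2" and l1: "l \<ge> 1"
    and C1: "coprime q R"
    and C2: "(s + 1) * r < l * R"
    and C3: "s + 1 \<le> l" "l < q"
    and C4: "l * R \<le> m"
    and a_in: "\<forall>i\<in>{1..l}. a i \<in> Fq q \<and> a i \<noteq> 0"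
    and a_inj: "inj_on a {1..l}"
    and P_irr: "irreducible_over q P" and P_monic: "lead_coeff P = 1" and P_deg: "degree P = m"
    and P_cong: "\<exists>g. poly_over q g \<and> P - 1 = h * g"
    and \<alpha>_root: "poly P \<alpha> = 0"
    and \<beta>_basis: "\<forall>i\<in>{1..l}. indep_over (Fq q) (*) (map (\<beta> i) [1..<R+1]) \<and>
        span_over (Fq q) (*) (\<beta> i ` {1..R}) = torsion q \<alpha> (monom 1 R - [:a i:])"
  shows "subspace_over (Fq q) vscale C
    \<and> dim_over (Fq q) vscale C = m * k
    \<and> int (min_rank_dist q n C) = int (l * R) - int (R * s) - int r + 1
    \<and> rank_locality q n C r \<delta>
    \<and> int (min_rank_dist q n C) = int n - int k + 1 - (\<lceil>real k / real r\<rceil> - 1) * (int \<delta> - 1)"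
proof -
  obtain p e where pe: "prime p" "e > 0" "q = p ^ e" using q_pp by blast
  have q2: "q \<ge> 2" using C3 l1 by linarith
  have R1: "R \<ge> 1" using r1 \<delta>2 unfolding R_def by simp
  have m1: "m \<ge> 1"
  proof -
    have "0 < l * R" using l1 R1 by simp
    then show ?thesis using C4 by linarith
  qed
  have CH: "CHAR('f) = p" by (rule CHAR_eq_p[OF card_k pe])
  have pc: "prime CHAR('f)" using CH pe by simp
  have fr: "\<And>i (x::'f) y. (x + y) ^ (q ^ i) = x ^ (q ^ i) + y ^ (q ^ i)"
  proof -
    fix i and x y :: 'f
    have "q ^ i = CHAR('f) ^ (e * i)" using CH pe by (simp add: power_mult)
    then show "(x + y) ^ (q ^ i) = x ^ (q ^ i) + y ^ (q ^ i)" by (rule freshmans_dream'[OF pc])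
  qed
  have cF: "card (Fq q :: 'f set) = q" by (rule card_Fq[OF card_k m1 q2])
  interpret tw q "TYPE('f)" by unfold_locales (use q2 fr cF in auto)
  interpret ml: mainl q "TYPE('f)" m r \<delta> l s R a \<alpha> \<beta>
    by unfold_locales (use card_k r1 \<delta>2 l1 C3 a_in a_inj \<beta>_basis in \<open>simp_all add: R_def\<close>)
  have CC: "C = range ml.cw"
    using ml.C_eq unfolding C_def enc_def M_def \<phi>TR_def by simp
  show ?thesis unfolding CC n_def k_def using ml.final by simp
qed


end
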